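(* Let $0<\alpha,\beta<\tfrac12$ and $g\in C_b^1(M)$. The map $h_g$ is well defined on $A$, injective, and $h_g(A)=A_g$, with inverse $h_g^{-1}:A_g\to A$ given by $h_g^{-1}(x,y,z,w)=\big(x,y,z,w-\sum_{i\ge0}\beta^i g(B_\alpha^{-i-1}(x,y))\big)$; moreover $B(v)=h_g^{-1}(B_g(h_g(v)))$ for $v\in A$. Furthermore: (i) if $\alpha>\beta$, $h_g$ is bi-Lipschitz; (ii) if $\alpha=\beta$, $h_g$ and $h_g^{-1}$ are Hölder continuous for every Hölder exponent $\rho<1$; (iii) if $\alpha<\beta$, $h_g$ is Hölder continuous with Hölder exponent $\rho=\frac{\log\beta}{\log\alpha}$.
   Context: $M=[0,1)\times\mathbb R$. $B_\alpha(x,y)=(2x,\alpha y)$ if $0\le x<\tfrac12$ and $(2x-1,\alpha y+1-\alpha)$ if $\tfrac12\le x<1$; likewise $B_\beta$. $C_b^1(M)$: $C^1$ functions on the interior of $M$ with bounded function and derivative, extended continuously to the closure (they are Lipschitz). $B_g(x,y,z,w)=(B_\alpha(x,y),B_\beta(z,w)+(0,g(x,y)))$ on $M\times M$, and $B=B_0$. $A_\alpha\subset[0,1]$ is the Cantor set with $A_\alpha=\alpha A_\alpha\cup(\alpha A_\alpha+1-\alpha)$ (similarly $A_\beta$), $A=[0,1)\times A_\alpha\times[0,1)\times A_\beta$. On $[0,1)\times A_\alpha$, $B_\alpha^{-1}(x,y)=(x/2,y/\alpha)$ if $y\le\tfrac12$ and $((x+1)/2,(y-(1-\alpha))/\alpha)$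 if $y>\tfrac12$. $h_g(x,y,z,w)=\big(x,y,z,w+\sum_{i\ge0}\beta^i g(B_\alpha^{-i-1}(x,y))\big)$. For $\delta>0$ let $V=[0,1)\times[-\delta,1+\delta]\times[0,1)\times[-\delta-\frac{\|g\|_\infty}{1-\beta},1+\delta+\frac{\|g\|_\infty}{1-\beta}]$ (so $B_g(V)\subset V$), and the attractor of $B_g$ is $A_g=\bigcap_{n\in\mathbb N}B_g^n(V)$. Continuity properties refer to the Euclidean metric on $A$ and $A_g$. *)

theory Defs
  imports "HOL-Analysis.Analysis"
begin

text \<open>Points of M x M are represented as (x,y,z,w) :: real * real * real * real;
  the product metric on nested pairs is the Euclidean metric.\<close>

definition strip :: "(real \<times> real) set" where
  "strip = {0..<1} \<times> UNIV"

definition bak :: "real \<Rightarrow> real \<times> real \<Rightarrow> real \<times> real" where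
  "bak a = (\<lambda>(x, y). if x < 1/2 then (2*x, a*y) else (2*x - 1, a*y + 1 - a))"

definition bak_inv :: "real \<Rightarrow> real \<times> real \<Rightarrow> real \<times> real" where
  "bak_inv a = (\<lambda>(x, y). if y \<le> 1/2 then (x/2, y/a) else ((x+1)/2, (y - (1 - a))/a))"

definition cantor :: "real \<Rightarrow> real set" where
  "cantor a = (THE K. K \<subseteq> {0..1} \<and> compact K \<and> K \<noteq> {} \<and>
       K = (\<lambda>y. a*y) ` K \<union> (\<lambda>y. a*y + 1 - a) ` K)"

definition Cb1 :: "(real \<times> real \<Rightarrow> real) \<Rightarrow> bool" where
  "Cb1 g \<longleftrightarrow>
     (\<exists>g' :: real \<times> real \<Rightarrow> (real \<times> real) \<Rightarrow>\<^sub>L real.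
        (\<forall>p\<in>{0<..<1} \<times> UNIV. (g has_derivative blinfun_apply (g' p)) (at p)) \<and>
        continuous_on ({0<..<1} \<times> UNIV) g' \<and>
        (\<exists>C. \<forall>p\<in>{0<..<1} \<times> UNIV. norm (g' p) \<le> C)) \<and>
     bounded (g ` strip) \<and>
     (\<exists>G. continuous_on ({0..1} \<times> UNIV) G \<and> (\<forall>p\<in>strip. G p = g p))"

definition supnorm :: "(real \<times> real \<Rightarrow> real) \<Rightarrow> real" where
  "supnorm g = (SUP p\<in>strip. \<bar>g p\<bar>)"

text \<open>The skew product B_g on M x M; B = B_0.\<close>
definition Bg :: "real \<Rightarrow> real \<Rightarrow> (real \<times> real \<Rightarrow> real) \<Rightarrow>
    real \<times> real \<times> real \<times> real \<Rightarrow> real \<times> real \<times> real \<times> real" where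
  "Bg a b g = (\<lambda>(x, y, z, w).
     (fst (bak a (x, y)), snd (bak a (x, y)),
      fst (bak b (z, w)), snd (bak b (z, w)) + g (x, y)))"

definition bigA :: "real \<Rightarrow> real \<Rightarrow> (real \<times> real \<times> real \<times> real) set" where
  "bigA a b = {0..<1} \<times> cantor a \<times> {0..<1} \<times> cantor b"

definition hg :: "real \<Rightarrow> real \<Rightarrow> (real \<times> real \<Rightarrow> real) \<Rightarrow>
    real \<times> real \<times> real \<times> real \<Rightarrow> real \<times> real \<times> real \<times> real" where
  "hg a b g = (\<lambda>(x, y, z, w).
     (x, y, z, w + (\<Sum>i. b ^ i * g ((bak_inv a ^^ Suc i) (x, y)))))"

definition hg_inv :: "real \<Rightarrow> real \<Rightarrow> (real \<times> real \<Rightarrow> real) \<Rightarrow>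
    real \<times> real \<times> real \<times> real \<Rightarrow> real \<times> real \<times> real \<times> real" where
  "hg_inv a b g = (\<lambda>(x, y, z, w).
     (x, y, z, w - (\<Sum>i. b ^ i * g ((bak_inv a ^^ Suc i) (x, y)))))"

definition trapV :: "real \<Rightarrow> (real \<times> real \<Rightarrow> real) \<Rightarrow> real \<Rightarrow>
    (real \<times> real \<times> real \<times> real) set" where
  "trapV b g \<delta> = {0..<1} \<times> {-\<delta>..1+\<delta>} \<times> {0..<1} \<times>
     {-\<delta> - supnorm g / (1 - b) .. 1 + \<delta> + supnorm g / (1 - b)}"

definition Ag :: "real \<Rightarrow> real \<Rightarrow> (real \<times> real \<Rightarrow> real) \<Rightarrow> real \<Rightarrow>
    (real \<times> real \<times> real \<times> real) set" where
  "Ag a b g \<delta> = (\<Inter>n. (Bg a b g ^^ n) ` trapV b g \<delta>)"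

definition bilipschitz_on :: "'a::metric_space set \<Rightarrow> ('a \<Rightarrow> 'b::metric_space) \<Rightarrow> bool" where
  "bilipschitz_on S f \<longleftrightarrow> (\<exists>C>0. \<forall>u\<in>S. \<forall>v\<in>S.
      dist (f u) (f v) \<le> C * dist u v \<and> dist u v \<le> C * dist (f u) (f v))"

definition holder_on :: "'a::metric_space set \<Rightarrow> ('a \<Rightarrow> 'b::metric_space) \<Rightarrow> real \<Rightarrow> bool" where
  "holder_on S f \<rho> \<longleftrightarrow> (\<exists>C. \<forall>u\<in>S. \<forall>v\<in>S. dist (f u) (f v) \<le> C * dist u v powr \<rho>)"

end

theory Submission
  imports Defs
begin


definition cprop :: "real \<Rightarrow> real set \<Rightarrow> bool" where
  "cprop a K \<longleftrightarrow> K \<subseteq> {0..1} \<and> compact K \<and> K \<noteq> {} \<and>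
       K = (\<lambda>y. a*y) ` K \<union> (\<lambda>y. a*y + 1 - a) ` K"

definition Jset :: "real \<Rightarrow> real set" where "Jset a = {0..a} \<union> {1-a..1}"
definition Tm :: "real \<Rightarrow> real \<Rightarrow> real" where
  "Tm a y = (if y \<le> 1/2 then y/a else (y-(1-a))/a)"
definition Sn :: "real \<Rightarrow> nat \<Rightarrow> real set" where
  "Sn a n = {y. \<forall>k\<le>n. (Tm a ^^ k) y \<in> Jset a}"
definition Cset :: "real \<Rightarrow> real set" where
  "Cset a = {y. \<forall>n. (Tm a ^^ n) y \<in> Jset a}"

lemma Sn_Suc: "Sn a (Suc n) = Jset a \<inter> Tm a -` Sn a n"
proof -
  have "(\<forall>k\<le>Suc n. (Tm a ^^ k) y \<in> Jset a) \<longleftrightarrow> y \<in> Jset a \<and> (\<forall>k\<le>n. (Tm a ^^ k) (Tm a y) \<in> Jset a)" for y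
  proof
    assume h: "\<forall>k\<le>Suc n. (Tm a ^^ k) y \<in> Jset a"
    show "y \<in> Jset a \<and> (\<forall>k\<le>n. (Tm a ^^ k) (Tm a y) \<in> Jset a)"
      using h[rule_format, of 0] h[rule_format, of "Suc _"] by (simp only: funpow_Suc_right o_apply) auto
  next
    assume h: "y \<in> Jset a \<and> (\<forall>k\<le>n. (Tm a ^^ k) (Tm a y) \<in> Jset a)"
    show "\<forall>k\<le>Suc n. (Tm a ^^ k) y \<in> Jset a"
    proof (intro allI impI)
      fix k assume "k \<le> Suc n"
      then show "(Tm a ^^ k) y \<in> Jset a" using h
      proof (cases k)
        case (Suc j)
        have "(Tm a ^^ k) y = (Tm a ^^ j) (Tm a y)" unfolding Suc by (simp only: funpow_Suc_right o_apply)
        then show ?thesis using h Suc \<open>k \<le> Suc n\<close> by simp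
      qed simp
    qed
  qed
  then show ?thesis unfolding Sn_def by auto
qed

lemma Sn_closed:
  assumes "0 < a" "a < 1/2"
  shows "closed (Sn a n)"
proof (induction n)
  case 0
  have "Sn a 0 = Jset a" by (auto simp: Sn_def)
  then show ?case by (simp add: Jset_def closed_Un)
next
  case (Suc n)
  have c1: "continuous_on {0..a} (Tm a)"
  proof -
    have "continuous_on {0..a} (\<lambda>y. y / a)" using assms by (intro continuous_intros) auto
    moreover have "\<forall>y\<in>{0..a}. Tm a y = y/a" using assms by (auto simp: Tm_def)
    ultimately show ?thesis using continuous_on_cong[of "{0..a}" "{0..a}" "Tm a" "\<lambda>y. y/a"] by simp
  qed
  have c2: "continuous_on {1-a..1} (Tm a)"
  proof -
    have "continuous_on {1-a..1} (\<lambda>y. (y-(1-a)) / a)" using assms by (intro continuous_intros) auto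
    moreover have "\<forall>y\<in>{1-a..1}. Tm a y = (y-(1-a))/a" using assms by (auto simp: Tm_def)
    ultimately show ?thesis using continuous_on_cong[of "{1-a..1}" "{1-a..1}" "Tm a" "\<lambda>y. (y-(1-a))/a"] by simp
  qed
  have "continuous_on (Jset a) (Tm a)" unfolding Jset_def
    by (rule continuous_on_closed_Un[OF _ _ c1 c2]) auto
  moreover have "closed (Jset a)" by (simp add: Jset_def closed_Un)
  ultimately show ?case unfolding Sn_Suc using Suc.IH by (rule continuous_closed_preimage)
qed

lemma Cset_Inter: "Cset a = (\<Inter>n. Sn a n)"
  by (auto simp: Cset_def Sn_def)

lemma Tm0: "(Tm a ^^ n) 0 = 0"
  by (induction n) (auto simp: Tm_def)

lemma cprop_Cset:
  assumes "0 < a" "a < 1/2"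
  shows "cprop a (Cset a)"
proof -
  have sub: "Cset a \<subseteq> {0..1}"
  proof
    fix y assume "y \<in> Cset a"
    then have "(Tm a ^^ 0) y \<in> Jset a" unfolding Cset_def by blast
    then show "y \<in> {0..1}" using assms by (auto simp: Jset_def)
  qed
  have cl: "closed (Cset a)" unfolding Cset_Inter using Sn_closed[OF assms] by auto
  have cp: "compact (Cset a)"
  proof -
    have "bounded (Cset a)" using sub bounded_subset[OF bounded_closed_interval] by blast
    then show ?thesis using cl by (simp add: compact_eq_bounded_closed)
  qed
  have ne: "Cset a \<noteq> {}"
  proof -
    have "0 \<in> Cset a" using assms by (auto simp: Cset_def Tm0 Jset_def)
    then show ?thesis by auto
  qed
  have mem: "y \<in> Cset a \<longleftrightarrow> y \<in> Jset a \<and> Tm a y \<in> Cset a" for y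
  proof
    assume h: "y \<in> Cset a"
    have "(Tm a ^^ 0) y \<in> Jset a" using h unfolding Cset_def by blast
    moreover have "Tm a y \<in> Cset a" unfolding Cset_def
    proof (safe)
      fix n
      have e: "(Tm a ^^ n) (Tm a y) = (Tm a ^^ Suc n) y" by (simp only: funpow_Suc_right o_apply)
      have "(Tm a ^^ Suc n) y \<in> Jset a" using h unfolding Cset_def by blast
      then show "(Tm a ^^ n) (Tm a y) \<in> Jset a" by (simp only: e)
    qed
    ultimately show "y \<in> Jset a \<and> Tm a y \<in> Cset a" by simp
  next
    assume h: "y \<in> Jset a \<and> Tm a y \<in> Cset a"
    show "y \<in> Cset a" unfolding Cset_def
    proof (safe)
      fix n show "(Tm a ^^ n) y \<in> Jset a"
      proof (cases n)
        case (Suc j)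
        have "(Tm a ^^ n) y = (Tm a ^^ j) (Tm a y)" unfolding Suc by (simp only: funpow_Suc_right o_apply)
        then show ?thesis using h unfolding Cset_def by simp
      qed (use h in simp)
    qed
  qed
  have eq: "Cset a = (\<lambda>y. a*y) ` Cset a \<union> (\<lambda>y. a*y + 1 - a) ` Cset a"
  proof (intro equalityI subsetI)
    fix y assume y: "y \<in> Cset a"
    have yJ: "y \<in> Jset a" and ty: "Tm a y \<in> Cset a" using y mem[of y] by simp_all
    show "y \<in> (\<lambda>y. a*y) ` Cset a \<union> (\<lambda>y. a*y + 1 - a) ` Cset a"
    proof (cases "y \<le> 1/2")
      case True
      then have "y = a * Tm a y" using assms by (auto simp: Tm_def)
      then show ?thesis using ty by blast
    next
      case False
      then have "y = a * Tm a y + 1 - a" using assms by (auto simp: Tm_def)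
      then show ?thesis using ty by blast
    qed
  next
    fix y assume "y \<in> (\<lambda>y. a*y) ` Cset a \<union> (\<lambda>y. a*y + 1 - a) ` Cset a"
    then obtain k where k: "k \<in> Cset a" and "y = a*k \<or> y = a*k+1-a" by blast
    then have k01: "0 \<le> k" "k \<le> 1" using sub by auto
    show "y \<in> Cset a"
    proof (cases "y = a*k")
      case True
      then have "y \<le> a" using k01 assms by (simp add: mult_left_le)
      moreover have "y \<le> 1/2" using \<open>y \<le> a\<close> assms by linarith
      ultimately have "Tm a y = k" "y \<in> Jset a" using True assms k01 by (auto simp: Tm_def Jset_def)
      then show ?thesis using mem[of y] k by simp
    next
      case False
      then have yy: "y = a*k+1-a" using \<open>y = a*k \<or> y = a*k+1-a\<close> by auto
      have "a*k \<le> a" using k01 assms by (simp add: mult_left_le)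
      then have "y \<ge> 1 - a" "y \<le> 1" using yy k01 assms by auto
      then have "Tm a y = k" "y \<in> Jset a" using yy assms by (auto simp: Tm_def Jset_def)
      then show ?thesis using mem[of y] k by simp
    qed
  qed
  show ?thesis unfolding cprop_def using sub cp ne eq by blast
qed

lemma cprop_approx:
  assumes "0 < a" "a < 1/2" "cprop a K1" "cprop a K2" "y \<in> K1"
  shows "\<exists>k\<in>K2. \<bar>y - k\<bar> \<le> a ^ n"
  using assms(5)
proof (induction n arbitrary: y)
  case 0
  obtain k where "k \<in> K2" using assms(4) unfolding cprop_def by blast
  moreover have "y \<in> {0..1}" "k \<in> {0..1}" using 0 assms(3,4) \<open>k \<in> K2\<close> unfolding cprop_def by blast+
  ultimately show ?case by (intro bexI[of _ k]) auto
next
  case (Suc n)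
  have "y \<in> (\<lambda>y. a*y) ` K1 \<union> (\<lambda>y. a*y + 1 - a) ` K1" using Suc.prems assms(3) unfolding cprop_def by blast
  then obtain y1 where y1: "y1 \<in> K1" and "y = a*y1 \<or> y = a*y1+1-a" by blast
  obtain k where k: "k \<in> K2" "\<bar>y1 - k\<bar> \<le> a^n" using Suc.IH y1 by blast
  have K2eq: "K2 = (\<lambda>y. a*y) ` K2 \<union> (\<lambda>y. a*y + 1 - a) ` K2" using assms(4) unfolding cprop_def by blast
  have s1: "(\<lambda>y. a*y) ` K2 \<subseteq> K2" "(\<lambda>y. a*y + 1 - a) ` K2 \<subseteq> K2" using K2eq by (metis Un_upper1, metis Un_upper2)
  have "a*k \<in> K2" "a*k+1-a \<in> K2" using k(1) s1 by blast+
  moreover have "\<bar>a*y1 - a*k\<bar> \<le> a^Suc n" "\<bar>(a*y1+1-a) - (a*k+1-a)\<bar> \<le> a^Suc n"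
    using k(2) assms(1) by (auto simp: abs_mult right_diff_distrib[symmetric] mult_left_mono)
  ultimately show ?case using \<open>y = a*y1 \<or> y = a*y1+1-a\<close> by blast
qed

lemma closed_approx_mem:
  fixes K :: "real set"
  assumes "closed K" "0 < a" "a < 1" "\<And>n. \<exists>k\<in>K. \<bar>y - k\<bar> \<le> c * a ^ n"
  shows "y \<in> K"
proof -
  have "\<exists>k\<in>K. dist k y < e" if e: "e > 0" for e
  proof -
    obtain n where n: "a ^ n < e / (\<bar>c\<bar> + 1)" using real_arch_pow_inv[of "e/(\<bar>c\<bar>+1)" a] e assms by auto
    obtain k where k: "k \<in> K" "\<bar>y - k\<bar> \<le> c * a ^ n" using assms(4) by blast
    have "c * a^n \<le> (\<bar>c\<bar>+1) * a^n" using assms(2) by (intro mult_right_mono) auto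
    also have "\<dots> < e" using n by (simp add: field_simps)
    finally have "dist k y < e" using k by (simp add: dist_real_def abs_minus_commute)
    then show ?thesis using k by blast
  qed
  then show ?thesis using closed_approachable[OF assms(1)] by blast
qed

lemma cprop_unique:
  assumes "0 < a" "a < 1/2" "cprop a K1" "cprop a K2"
  shows "K1 = K2"
proof -
  have "K1 \<subseteq> K2" if "cprop a K1" "cprop a K2" for K1 K2
  proof
    fix y assume "y \<in> K1"
    have "closed K2" using that(2) compact_imp_closed unfolding cprop_def by blast
    then show "y \<in> K2"
      by (rule closed_approx_mem[where a=a and c=1]) (use assms cprop_approx[OF assms(1,2) that \<open>y\<in>K1\<close>] in auto)
  qed
  then show ?thesis using assms by blast
qed

lemma cprop_cantor:
  assumes "0 < a" "a < 1/2"
  shows "cprop a (cantor a)"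
proof -
  have "cantor a = (THE K. cprop a K)" unfolding cantor_def cprop_def by simp
  also have "\<dots> = Cset a"
    by (rule the_equality) (use cprop_Cset[OF assms] cprop_unique[OF assms] in auto)
  finally show ?thesis using cprop_Cset[OF assms] by simp
qed



context
  fixes a :: real
  assumes a0: "0 < a" and a1: "a < 1/2"
begin

lemma cantor_sub: "cantor a \<subseteq> {0..1}"
  using cprop_cantor[OF a0 a1] unfolding cprop_def by blast

lemma cantor_closed: "closed (cantor a)"
  using cprop_cantor[OF a0 a1] compact_imp_closed unfolding cprop_def by blast

lemma cantor_eq: "cantor a = (\<lambda>y. a*y) ` cantor a \<union> (\<lambda>y. a*y + 1 - a) ` cantor a"
  using cprop_cantor[OF a0 a1] unfolding cprop_def by blast

lemma cantor_f0: "k \<in> cantor a \<Longrightarrow> a*k \<in> cantor a"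
  using cantor_eq by (metis Un_upper1 image_eqI subsetD)

lemma cantor_f1: "k \<in> cantor a \<Longrightarrow> a*k + 1 - a \<in> cantor a"
  using cantor_eq by (metis Un_upper2 image_eqI subsetD)

lemma cantor_cases:
  assumes "y \<in> cantor a"
  obtains k where "k \<in> cantor a" "y = a*k" "y \<le> a"
        | k where "k \<in> cantor a" "y = a*k + 1 - a" "y \<ge> 1 - a"
proof -
  have "y \<in> (\<lambda>y. a*y) ` cantor a \<union> (\<lambda>y. a*y + 1 - a) ` cantor a" using assms cantor_eq by blast
  then obtain k where k: "k \<in> cantor a" "y = a*k \<or> y = a*k + 1 - a" by blast
  then have "0 \<le> k" "k \<le> 1" using cantor_sub by auto
  then have "a*k \<le> a" "0 \<le> a*k" using a0 by (auto simp: mult_left_le)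
  then show ?thesis using k that by auto
qed

lemma cantor_low:
  assumes "y \<in> cantor a" "y \<le> 1/2"
  shows "y/a \<in> cantor a" "y \<le> a"
proof -
  from assms(1) show "y/a \<in> cantor a"
    by (cases rule: cantor_cases) (use a0 a1 assms(2) in auto)
  from assms(1) show "y \<le> a"
    by (cases rule: cantor_cases) (use a0 a1 assms(2) in auto)
qed

lemma cantor_high:
  assumes "y \<in> cantor a" "\<not> y \<le> 1/2"
  shows "(y - (1-a))/a \<in> cantor a" "y \<ge> 1-a"
proof -
  from assms(1) show "(y - (1-a))/a \<in> cantor a"
    by (cases rule: cantor_cases) (use a0 a1 assms(2) in auto)
  from assms(1) show "y \<ge> 1-a"
    by (cases rule: cantor_cases) (use a0 a1 assms(2) in auto)
qed

lemma cantor_approx_mem: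
  assumes "\<And>n. \<exists>k\<in>cantor a. \<bar>y - k\<bar> \<le> c * a ^ n"
  shows "y \<in> cantor a"
  by (rule closed_approx_mem[OF cantor_closed a0]) (use a1 assms in auto)

lemma bak_inv_in:
  assumes "0 \<le> x" "x < 1" "y \<in> cantor a"
  shows "bak_inv a (x, y) \<in> {0..<1} \<times> cantor a"
  using assms cantor_low[OF assms(3)] cantor_high[OF assms(3)] by (auto simp: bak_inv_def)

lemma bak_inv_iter_in:
  assumes "p \<in> {0..<1} \<times> cantor a"
  shows "(bak_inv a ^^ i) p \<in> {0..<1} \<times> cantor a"
proof (induction i)
  case 0 then show ?case using assms by simp
next
  case (Suc i)
  then show ?case using bak_inv_in by (cases "(bak_inv a ^^ i) p") auto
qed

lemma bak_bak_inv:
  assumes "0 \<le> x" "x < 1" "y \<in> cantor a"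
  shows "bak a (bak_inv a (x, y)) = (x, y)"
  using assms a0 by (auto simp: bak_inv_def bak_def field_simps)

lemma bak_inv_bak:
  assumes "a*y \<le> 1/2" "a*y > a - 1/2"
  shows "bak_inv a (bak a (x, y)) = (x, y)"
  using assms a0 by (auto simp: bak_inv_def bak_def)

end

lemma bak_inv_fst: "fst p \<in> {0..<1} \<Longrightarrow> fst (bak_inv a p) \<in> {0..<1}"
  by (cases p) (auto simp: bak_inv_def)

lemma bak_inv_iter_fst: "fst p \<in> {0..<1} \<Longrightarrow> fst ((bak_inv a ^^ i) p) \<in> {0..<1}"
proof (induction i)
  case (Suc i)
  then have "fst ((bak_inv a ^^ i) p) \<in> {0..<1}" by blast
  then show ?case by (simp only: funpow.simps o_apply) (rule bak_inv_fst)
qed simp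

lemma bak_fst: "fst p \<in> {0..<1} \<Longrightarrow> fst (bak a p) \<in> {0..<1}"
  by (cases p) (auto simp: bak_def)

lemma bak_fst_eq: "fst (bak a (x, y)) = fst (bak a' (x, y'))"
  by (auto simp: bak_def)

lemma bak_snd: "snd (bak a (x, y)) = a * y + (if x < 1/2 then 0 else 1 - a)"
  by (auto simp: bak_def)

lemma Cb1_bounded:
  assumes "Cb1 g" "p \<in> strip"
  shows "\<bar>g p\<bar> \<le> supnorm g"
proof -
  have "bounded (g ` strip)" using assms(1) unfolding Cb1_def by blast
  then obtain B where B: "\<forall>q\<in>strip. \<bar>g q\<bar> \<le> B" unfolding bounded_iff by auto
  have "bdd_above ((\<lambda>q. \<bar>g q\<bar>) ` strip)" using B by (auto intro: bdd_aboveI2)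
  then show ?thesis unfolding supnorm_def using assms(2) by (rule cSUP_upper2) auto
qed

lemma supnorm_nonneg: "Cb1 g \<Longrightarrow> 0 \<le> supnorm g"
  using Cb1_bounded[of g "(0,0)"] by (auto simp: strip_def)

lemma Cb1_lipschitz:
  assumes "Cb1 g"
  obtains L where "L \<ge> 0" "\<And>p q. p \<in> strip \<Longrightarrow> q \<in> strip \<Longrightarrow> \<bar>g p - g q\<bar> \<le> L * dist p q"
proof -
  define U :: "(real \<times> real) set" where "U = {0<..<1} \<times> UNIV"
  obtain g' :: "real \<times> real \<Rightarrow> (real \<times> real) \<Rightarrow>\<^sub>L real" and C where
    d: "\<forall>p\<in>U. (g has_derivative blinfun_apply (g' p)) (at p)" and
    C: "\<forall>p\<in>U. norm (g' p) \<le> C"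
    using assms unfolding Cb1_def U_def by blast
  obtain G where G: "continuous_on ({0..1} \<times> UNIV) G" "\<forall>p\<in>strip. G p = g p"
    using assms unfolding Cb1_def by blast
  have cvx: "convex U" unfolding U_def by (intro convex_Times) auto
  have lipU: "\<bar>g p - g q\<bar> \<le> C * dist p q" if "p \<in> U" "q \<in> U" for p q
  proof -
    have "norm (g p - g q) \<le> C * norm (p - q)"
      by (rule differentiable_bound[OF cvx _ _ that, where f'="\<lambda>p. blinfun_apply (g' p)"])
         (use d C in \<open>auto simp: norm_blinfun.rep_eq intro: has_derivative_at_withinI\<close>)
    then show ?thesis by (simp add: dist_norm)
  qed
  have clU: "closure U = {0..1} \<times> UNIV" unfolding U_def by (simp add: closure_Times)
  have US: "U \<subseteq> strip" unfolding U_def strip_def by auto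
  have GU: "G p = g p" if "p \<in> U" for p using G(2) US that by auto
  have step1: "\<bar>G p - G q\<bar> \<le> C * dist p q" if "p \<in> closure U" "q \<in> U" for p q
  proof -
    have "(\<lambda>p. \<bar>G p - G q\<bar> - C * dist p q) p \<le> 0"
    proof (rule continuous_le_on_closure[OF _ that(1)])
      show "continuous_on (closure U) (\<lambda>p. \<bar>G p - G q\<bar> - C * dist p q)"
        unfolding clU by (intro continuous_intros G(1))
      fix p' assume "p' \<in> U"
      then show "\<bar>G p' - G q\<bar> - C * dist p' q \<le> 0" using lipU[of p' q] GU that(2) by simp
    qed
    then show ?thesis by simp
  qed
  have step2: "\<bar>G p - G q\<bar> \<le> C * dist p q" if "p \<in> closure U" "q \<in> closure U" for p q
  proof -
    have "(\<lambda>q. \<bar>G p - G q\<bar> - C * dist p q) q \<le> 0"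
    proof (rule continuous_le_on_closure[OF _ that(2)])
      show "continuous_on (closure U) (\<lambda>q. \<bar>G p - G q\<bar> - C * dist p q)"
        unfolding clU by (intro continuous_intros G(1))
      fix q' assume "q' \<in> U"
      then show "\<bar>G p - G q'\<bar> - C * dist p q' \<le> 0" using step1[OF that(1) \<open>q' \<in> U\<close>] by simp
    qed
    then show ?thesis by simp
  qed
  show ?thesis
  proof (rule that[of "max C 0"])
    fix p q assume pq: "p \<in> strip" "q \<in> strip"
    then have "p \<in> closure U" "q \<in> closure U" unfolding clU strip_def by auto
    then have "\<bar>g p - g q\<bar> \<le> C * dist p q" using step2 G(2) pq by metis
    also have "\<dots> \<le> max C 0 * dist p q" by (intro mult_right_mono) auto
    finally show "\<bar>g p - g q\<bar> \<le> max C 0 * dist p q" .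
  qed auto
qed

definition phi :: "real \<Rightarrow> real \<Rightarrow> (real \<times> real \<Rightarrow> real) \<Rightarrow> real \<times> real \<Rightarrow> real" where
  "phi a b g p = (\<Sum>i. b ^ i * g ((bak_inv a ^^ Suc i) p))"

lemma hg_eq: "hg a b g (x, y, z, w) = (x, y, z, w + phi a b g (x, y))"
  by (simp add: hg_def phi_def)

lemma hg_inv_eq: "hg_inv a b g (x, y, z, w) = (x, y, z, w - phi a b g (x, y))"
  by (simp add: hg_inv_def phi_def)

lemma hg_inv_hg: "hg_inv a b g (hg a b g v) = v"
  by (cases v) (simp add: hg_eq hg_inv_eq)

lemma hg_hg_inv: "hg a b g (hg_inv a b g v) = v"
  by (cases v) (simp add: hg_eq hg_inv_eq)

context
  fixes b :: real and g :: "real \<times> real \<Rightarrow> real"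
  assumes b0: "0 < b" and b1: "b < 1" and g: "Cb1 g"
begin

lemma term_bound:
  assumes "fst p \<in> {0..<1}"
  shows "\<bar>g ((bak_inv a ^^ i) p)\<bar> \<le> supnorm g"
proof -
  have "(bak_inv a ^^ i) p \<in> strip" using bak_inv_iter_fst[OF assms, where a=a and i=i] by (simp add: strip_def mem_Times_iff)
  then show ?thesis by (rule Cb1_bounded[OF g])
qed

lemma geo_summ: "summable (\<lambda>i. b ^ i * supnorm g)"
  using b0 b1 by (intro summable_mult2) auto

lemma phi_summable:
  assumes "fst p \<in> {0..<1}"
  shows "summable (\<lambda>i. b ^ i * g ((bak_inv a ^^ Suc i) p))"
proof (rule summable_comparison_test'[OF geo_summ])
  fix n
  show "norm (b ^ n * g ((bak_inv a ^^ Suc n) p)) \<le> b ^ n * supnorm g"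
    using term_bound[OF assms, where i="Suc n"] b0 by (auto simp: abs_mult intro: mult_left_mono)
qed

lemma phi_bound:
  assumes "fst p \<in> {0..<1}"
  shows "\<bar>phi a b g p\<bar> \<le> supnorm g / (1 - b)"
proof -
  have sg: "(\<Sum>i. b ^ i * supnorm g) = supnorm g / (1 - b)"
    using suminf_geometric[of b] suminf_mult2[of "\<lambda>i. b^i" "supnorm g"] b0 b1 by auto
  have t: "\<bar>b ^ i * g ((bak_inv a ^^ Suc i) p)\<bar> \<le> b ^ i * supnorm g" for i
    using term_bound[OF assms, where i="Suc i"] b0 by (auto simp: abs_mult intro: mult_left_mono)
  have "phi a b g p \<le> (\<Sum>i. b ^ i * supnorm g)" unfolding phi_def
  proof (rule suminf_le[OF _ phi_summable[OF assms] geo_summ])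
    fix n show "b ^ n * g ((bak_inv a ^^ Suc n) p) \<le> b ^ n * supnorm g"
      using t[of n] by (auto simp: abs_le_iff)
  qed
  moreover have "- (\<Sum>i. b ^ i * supnorm g) \<le> phi a b g p" unfolding phi_def
  proof -
    have "(\<Sum>i. - (b ^ i * supnorm g)) \<le> (\<Sum>i. b ^ i * g ((bak_inv a ^^ Suc i) p))"
    proof (rule suminf_le[OF _ _ phi_summable[OF assms]])
      fix n show "- (b ^ n * supnorm g) \<le> b ^ n * g ((bak_inv a ^^ Suc n) p)"
        using t[of n] by (auto simp: abs_le_iff)
    qed (use geo_summ summable_minus in auto)
    then show "- (\<Sum>i. b ^ i * supnorm g) \<le> (\<Sum>i. b ^ i * g ((bak_inv a ^^ Suc i) p))"
      using suminf_minus[OF geo_summ] by simp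
  qed
  ultimately show ?thesis using sg by auto
qed

lemma phi_bak:
  assumes "fst p \<in> {0..<1}" "bak_inv a (bak a p) = p"
  shows "phi a b g (bak a p) = g p + b * phi a b g p"
proof -
  define f where "f i = b ^ i * g ((bak_inv a ^^ i) p)" for i
  have e: "(bak_inv a ^^ Suc i) (bak a p) = (bak_inv a ^^ i) p" for i
    using assms(2) by (simp only: funpow_Suc_right o_apply)
  have "(\<lambda>i. b ^ i * g ((bak_inv a ^^ Suc i) p)) sums phi a b g p"
    unfolding phi_def using phi_summable[OF assms(1)] by (simp add: summable_sums)
  then have "(\<lambda>i. b * (b ^ i * g ((bak_inv a ^^ Suc i) p))) sums (b * phi a b g p)"
    by (rule sums_mult)
  then have "(\<lambda>i. f (Suc i)) sums (b * phi a b g p)" unfolding f_def by (simp add: mult.assoc)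
  then have "f sums (b * phi a b g p + f 0)" by (simp add: sums_Suc_iff)
  moreover have "phi a b g (bak a p) = suminf f" unfolding phi_def f_def e ..
  ultimately show ?thesis unfolding f_def by (simp add: sums_iff)
qed

end



definition p12 :: "real \<times> real \<times> real \<times> real \<Rightarrow> real \<times> real" where
  "p12 v = (fst v, fst (snd v))"
definition p34 :: "real \<times> real \<times> real \<times> real \<Rightarrow> real \<times> real" where
  "p34 v = (fst (snd (snd v)), snd (snd (snd v)))"

lemma Bg_p12: "p12 (Bg a b g q) = bak a (p12 q)"
  by (cases q) (simp add: Bg_def p12_def)

lemma Bg_p34: "p34 (Bg a b (\<lambda>_. 0) q) = bak b (p34 q)"
  by (cases q) (simp add: Bg_def p34_def)

lemma Bg_iter_p12: "p12 ((Bg a b g ^^ n) q) = (bak a ^^ n) (p12 q)"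
  by (induction n) (simp_all add: Bg_p12)

lemma Bg_iter_p34: "p34 ((Bg a b (\<lambda>_. 0) ^^ n) q) = (bak b ^^ n) (p34 q)"
  by (induction n) (simp_all add: Bg_p34)

lemma bak_interval:
  assumes "0 < a" "a < 1/2" "0 \<le> t" "-t \<le> y" "y \<le> 1 + t" "0 \<le> x" "x < 1"
  shows "-(a*t) \<le> snd (bak a (x, y)) \<and> snd (bak a (x, y)) \<le> 1 + a*t \<and>
         0 \<le> fst (bak a (x, y)) \<and> fst (bak a (x, y)) < 1"
proof -
  have "a * (-t) \<le> a*y" "a * y \<le> a * (1+t)" using assms by (intro mult_left_mono; simp)+
  then show ?thesis using assms by (auto simp: bak_def algebra_simps)
qed

lemma bak_iter_approx:
  assumes a: "0 < a" "a < 1/2" and R: "0 \<le> R" and p: "0 \<le> fst p" "fst p < 1" "-R \<le> snd p" "snd p \<le> 1 + R"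
  shows "0 \<le> fst ((bak a ^^ n) p) \<and> fst ((bak a ^^ n) p) < 1 \<and>
         (\<exists>k\<in>cantor a. \<bar>snd ((bak a ^^ n) p) - k\<bar> \<le> (1 + R) * a ^ n)"
proof (induction n)
  case 0
  obtain k where k: "k \<in> cantor a" using cprop_cantor[OF a] unfolding cprop_def by blast
  then have "k \<in> {0..1}" using cantor_sub[OF a] by blast
  then show ?case using p k by (auto intro!: bexI[of _ k])
next
  case (Suc n)
  obtain x y where xy: "(bak a ^^ n) p = (x, y)" by (cases "(bak a ^^ n) p")
  obtain k where k: "k \<in> cantor a" "\<bar>y - k\<bar> \<le> (1 + R) * a ^ n" using Suc xy by auto
  have x: "0 \<le> x" "x < 1" using Suc xy by auto
  have e: "(bak a ^^ Suc n) p = bak a (x, y)" using xy by simp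
  show ?case
  proof (cases "x < 1/2")
    case True
    then have "bak a (x, y) = (2*x, a*y)" by (simp add: bak_def)
    moreover have "\<bar>a*y - a*k\<bar> \<le> (1+R) * a ^ Suc n"
      using k(2) a by (auto simp: abs_mult right_diff_distrib[symmetric] mult_left_mono mult.left_commute)
    ultimately show ?thesis unfolding e using True x cantor_f0[OF a k(1)] by (auto intro!: bexI[of _ "a*k"])
  next
    case False
    then have "bak a (x, y) = (2*x - 1, a*y + 1 - a)" by (simp add: bak_def)
    moreover have "\<bar>(a*y + 1 - a) - (a*k + 1 - a)\<bar> \<le> (1+R) * a ^ Suc n"
      using k(2) a by (auto simp: abs_mult right_diff_distrib[symmetric] mult_left_mono mult.left_commute)
    ultimately show ?thesis unfolding e using False x cantor_f1[OF a k(1)] by (auto intro!: bexI[of _ "a*k+1-a"])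
  qed
qed

context
  fixes a b :: real and g :: "real \<times> real \<Rightarrow> real"
  assumes a0: "0 < a" and a1: "a < 1/2" and b0: "0 < b" and b1: "b < 1/2" and g: "Cb1 g"
begin

lemma conj1:
  assumes "0 \<le> x" "x < 1" "a*y \<le> 1/2" "a*y > a - 1/2"
  shows "hg_inv a b g (Bg a b g (x, y, z, w)) = Bg a b (\<lambda>_. 0) (hg_inv a b g (x, y, z, w))"
proof -
  have ph: "phi a b g (bak a (x, y)) = g (x, y) + b * phi a b g (x, y)"
    by (rule phi_bak[where b=b and g=g]) (use assms b0 b1 g bak_inv_bak[OF a0 a1] in auto)
  have "Bg a b g (x, y, z, w) = (fst (bak a (x, y)), snd (bak a (x, y)), fst (bak b (z, w)),
          snd (bak b (z, w)) + g (x, y))" by (simp add: Bg_def)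
  then have l: "hg_inv a b g (Bg a b g (x, y, z, w)) = (fst (bak a (x, y)), snd (bak a (x, y)), fst (bak b (z, w)),
          snd (bak b (z, w)) + g (x, y) - phi a b g (bak a (x, y)))"
    by (simp add: hg_inv_eq)
  have r: "Bg a b (\<lambda>_. 0) (hg_inv a b g (x, y, z, w)) = (fst (bak a (x, y)), snd (bak a (x, y)),
          fst (bak b (z, w - phi a b g (x, y))), snd (bak b (z, w - phi a b g (x, y))))"
    by (simp add: hg_inv_eq Bg_def)
  show ?thesis unfolding l r ph by (simp add: bak_snd algebra_simps bak_fst_eq[of b z _ b])
qed

definition eM :: real where "eM = (1 - 2*a) / (4*a)"

lemma eM_pos: "0 < eM" using a0 a1 by (simp add: eM_def)

lemma eM_good:
  assumes "-eM \<le> y" "y \<le> 1 + eM"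
  shows "a*y \<le> 1/2" "a*y > a - 1/2"
proof -
  have "a*y \<le> a * (1 + eM)" using assms a0 by (intro mult_left_mono) auto
  also have "\<dots> = (1 + 2*a)/4" using a0 by (simp add: eM_def field_simps)
  finally show "a*y \<le> 1/2" using a1 by simp
  have "a * (-eM) \<le> a*y" using assms a0 by (intro mult_left_mono) auto
  moreover have "a * (-eM) = -(1-2*a)/4" using a0 by (simp add: eM_def field_simps)
  ultimately show "a*y > a - 1/2" using a1 by simp
qed

definition goodq :: "real \<times> real \<times> real \<times> real \<Rightarrow> bool" where
  "goodq q \<longleftrightarrow> 0 \<le> fst q \<and> fst q < 1 \<and> -eM \<le> fst (snd q) \<and> fst (snd q) \<le> 1 + eM"

lemma goodq_Bg: "goodq q \<Longrightarrow> goodq (Bg a b g q)"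
proof -
  assume q: "goodq q"
  obtain x y z w where qq: "q = (x, y, z, w)" by (cases q)
  have "-(a*eM) \<le> snd (bak a (x, y)) \<and> snd (bak a (x, y)) \<le> 1 + a*eM \<and>
         0 \<le> fst (bak a (x, y)) \<and> fst (bak a (x, y)) < 1"
    by (rule bak_interval[OF a0 a1]) (use q qq eM_pos in \<open>auto simp: goodq_def\<close>)
  moreover have "a * eM \<le> eM" using a1 eM_pos by (simp add: mult_le_cancel_right1)
  ultimately show ?thesis by (simp add: qq goodq_def Bg_def)
qed

lemma conj_good:
  assumes "goodq q"
  shows "hg_inv a b g (Bg a b g q) = Bg a b (\<lambda>_. 0) (hg_inv a b g q)"
proof -
  obtain x y z w where qq: "q = (x, y, z, w)" by (cases q)
  show ?thesis unfolding qq
    by (rule conj1) (use assms eM_good qq in \<open>auto simp: goodq_def\<close>)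
qed

lemma conj_iter:
  assumes "goodq q"
  shows "hg_inv a b g ((Bg a b g ^^ n) q) = (Bg a b (\<lambda>_. 0) ^^ n) (hg_inv a b g q)"
  using assms
proof (induction n arbitrary: q)
  case 0 then show ?case by simp
next
  case (Suc n)
  have "hg_inv a b g ((Bg a b g ^^ Suc n) q) = hg_inv a b g ((Bg a b g ^^ n) (Bg a b g q))"
    by (simp only: funpow_Suc_right o_apply)
  also have "\<dots> = (Bg a b (\<lambda>_. 0) ^^ n) (hg_inv a b g (Bg a b g q))"
    using Suc.IH goodq_Bg[OF Suc.prems] by blast
  also have "\<dots> = (Bg a b (\<lambda>_. 0) ^^ n) (Bg a b (\<lambda>_. 0) (hg_inv a b g q))"
    using conj_good[OF Suc.prems] by simp
  also have "\<dots> = (Bg a b (\<lambda>_. 0) ^^ Suc n) (hg_inv a b g q)"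
    by (simp only: funpow_Suc_right o_apply)
  finally show ?case .
qed

lemma A_good: "v \<in> bigA a b \<Longrightarrow> goodq v"
  using cantor_sub[OF a0 a1] eM_pos unfolding bigA_def goodq_def by (auto simp: mem_Times_iff)

lemma conj_A:
  assumes "v \<in> bigA a b"
  shows "Bg a b (\<lambda>_. 0) v = hg_inv a b g (Bg a b g (hg a b g v))"
proof -
  have "goodq (hg a b g v)" using A_good[OF assms]
    by (cases v) (simp add: hg_eq goodq_def)
  then show ?thesis using conj_good hg_inv_hg by metis
qed

lemma Bg_hg: "v \<in> bigA a b \<Longrightarrow> Bg a b g (hg a b g v) = hg a b g (Bg a b (\<lambda>_. 0) v)"
  using conj_A hg_hg_inv by metis

definition Binv :: "real \<times> real \<times> real \<times> real \<Rightarrow> real \<times> real \<times> real \<times> real" where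
  "Binv v = (fst (bak_inv a (p12 v)), snd (bak_inv a (p12 v)), fst (bak_inv b (p34 v)), snd (bak_inv b (p34 v)))"

lemma Binv_A:
  assumes "v \<in> bigA a b"
  shows "Binv v \<in> bigA a b" "Bg a b (\<lambda>_. 0) (Binv v) = v"
proof -
  obtain x y z w where vv: "v = (x, y, z, w)" by (cases v)
  have h: "0 \<le> x" "x < 1" "y \<in> cantor a" "0 \<le> z" "z < 1" "w \<in> cantor b"
    using assms vv by (auto simp: bigA_def)
  have i1: "bak_inv a (x, y) \<in> {0..<1} \<times> cantor a" using bak_inv_in[OF a0 a1 h(1-3)] .
  have i2: "bak_inv b (z, w) \<in> {0..<1} \<times> cantor b" using bak_inv_in[OF b0 b1 h(4-6)] .
  show "Binv v \<in> bigA a b" using i1 i2 vv by (auto simp: Binv_def bigA_def p12_def p34_def mem_Times_iff)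
  have e1: "bak a (bak_inv a (x, y)) = (x, y)" using bak_bak_inv[OF a0 a1 h(1-3)] .
  have e2: "bak b (bak_inv b (z, w)) = (z, w)" using bak_bak_inv[OF b0 b1 h(4-6)] .
  show "Bg a b (\<lambda>_. 0) (Binv v) = v"
    using e1 e2 by (simp add: vv Binv_def p12_def p34_def Bg_def split: prod.splits)
qed

lemma V_contains_hg:
  assumes "0 < \<delta>" "v \<in> bigA a b"
  shows "hg a b g v \<in> trapV b g \<delta>"
proof -
  obtain x y z w where vv: "v = (x, y, z, w)" by (cases v)
  have h: "0 \<le> x" "x < 1" "y \<in> {0..1}" "0 \<le> z" "z < 1" "w \<in> {0..1}"
    using assms vv cantor_sub[OF a0 a1] cantor_sub[OF b0 b1] by (auto simp: bigA_def)
  have "\<bar>phi a b g (x, y)\<bar> \<le> supnorm g / (1 - b)"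
    by (rule phi_bound) (use b0 b1 g h in auto)
  then show ?thesis using h assms(1) by (auto simp: vv hg_eq trapV_def abs_le_iff)
qed

lemma hg_A_sub: "0 < \<delta> \<Longrightarrow> hg a b g ` bigA a b \<subseteq> Ag a b g \<delta>"
proof -
  assume d: "0 < \<delta>"
  have "\<forall>v\<in>bigA a b. hg a b g v \<in> (Bg a b g ^^ n) ` trapV b g \<delta>" for n
  proof (induction n)
    case 0 then show ?case using V_contains_hg[OF d] by simp
  next
    case (Suc n)
    show ?case
    proof
      fix v assume v: "v \<in> bigA a b"
      have "hg a b g v = Bg a b g (hg a b g (Binv v))"
        using Bg_hg[OF Binv_A(1)[OF v]] Binv_A(2)[OF v] by simp
      moreover have "hg a b g (Binv v) \<in> (Bg a b g ^^ n) ` trapV b g \<delta>" using Suc Binv_A(1)[OF v] by blast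
      then have "Bg a b g (hg a b g (Binv v)) \<in> Bg a b g ` ((Bg a b g ^^ n) ` trapV b g \<delta>)" by (rule imageI)
      moreover have "Bg a b g ` ((Bg a b g ^^ n) ` trapV b g \<delta>) = (Bg a b g ^^ Suc n) ` trapV b g \<delta>"
        by (simp only: funpow.simps image_comp)
      ultimately show "hg a b g v \<in> (Bg a b g ^^ Suc n) ` trapV b g \<delta>"
        using \<open>hg a b g v = _\<close> by simp
    qed
  qed
  then show ?thesis unfolding Ag_def by blast
qed

end



lemma bak_iter_interval:
  assumes a: "0 < a" "a < 1/2" and t: "0 \<le> t" and p: "0 \<le> fst p" "fst p < 1" "-t \<le> snd p" "snd p \<le> 1 + t"
  shows "0 \<le> fst ((bak a ^^ n) p) \<and> fst ((bak a ^^ n) p) < 1 \<and>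
         -(a^n*t) \<le> snd ((bak a ^^ n) p) \<and> snd ((bak a ^^ n) p) \<le> 1 + a^n*t"
proof (induction n)
  case 0 then show ?case using p by simp
next
  case (Suc n)
  obtain x y where xy: "(bak a ^^ n) p = (x, y)" by (cases "(bak a ^^ n) p")
  have "-(a*(a^n*t)) \<le> snd (bak a (x, y)) \<and> snd (bak a (x, y)) \<le> 1 + a*(a^n*t) \<and>
         0 \<le> fst (bak a (x, y)) \<and> fst (bak a (x, y)) < 1"
    by (rule bak_interval[OF a]) (use Suc xy t a in auto)
  then show ?case using xy by (simp add: mult.assoc)
qed

context
  fixes a b :: real and g :: "real \<times> real \<Rightarrow> real" and \<delta> :: real
  assumes a0: "0 < a" and a1: "a < 1/2" and b0: "0 < b" and b1: "b < 1/2" and g: "Cb1 g"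
    and d0: "0 < \<delta>"
begin

lemma V_inv: "q \<in> trapV b g \<delta> \<Longrightarrow> Bg a b g q \<in> trapV b g \<delta>"
proof -
  assume q: "q \<in> trapV b g \<delta>"
  obtain x y z w where qq: "q = (x, y, z, w)" by (cases q)
  define S where "S = supnorm g"
  define T where "T = \<delta> + S / (1 - b)"
  have S0: "0 \<le> S" using supnorm_nonneg[OF g] S_def by simp
  have h: "0 \<le> x" "x < 1" "-\<delta> \<le> y" "y \<le> 1 + \<delta>" "0 \<le> z" "z < 1" "-T \<le> w" "w \<le> 1 + T"
    using q qq by (auto simp: trapV_def T_def S_def)
  have i1: "-(a*\<delta>) \<le> snd (bak a (x, y)) \<and> snd (bak a (x, y)) \<le> 1 + a*\<delta> \<and>
         0 \<le> fst (bak a (x, y)) \<and> fst (bak a (x, y)) < 1"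
    by (rule bak_interval[OF a0 a1]) (use h d0 in auto)
  have ad: "a * \<delta> \<le> \<delta>" using a1 d0 by (simp add: mult_le_cancel_right1)
  have gb: "\<bar>g (x, y)\<bar> \<le> S" using Cb1_bounded[OF g, of "(x,y)"] h by (auto simp: strip_def S_def)
  have ST: "S = (1 - b) * T - (1 - b) * \<delta>" using b1 by (simp add: T_def field_simps)
  have bw: "b * (-T) \<le> b * w" "b * w \<le> b * (1 + T)" using h b0 by (intro mult_left_mono; simp)+
  have fz: "0 \<le> fst (bak b (z, w)) \<and> fst (bak b (z, w)) < 1" using h by (auto simp: bak_def)
  have "(1 - b) * \<delta> \<ge> 0" using b1 d0 by simp
  then have w': "-T \<le> snd (bak b (z, w)) + g (x, y) \<and> snd (bak b (z, w)) + g (x, y) \<le> 1 + T"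
    using bw gb ST b0 b1 by (auto simp: bak_snd abs_le_iff algebra_simps)
  show ?thesis using i1 ad fz w' by (auto simp: qq Bg_def trapV_def T_def S_def)
qed

lemma V_iter: "q \<in> trapV b g \<delta> \<Longrightarrow> (Bg a b g ^^ n) q \<in> trapV b g \<delta>"
  by (induction n) (auto intro: V_inv)

lemma Ag_approx:
  assumes p: "p \<in> Ag a b g \<delta>"
  obtains R where "0 \<le> R" "\<And>n. 0 \<le> fst (hg_inv a b g p) \<and> fst (hg_inv a b g p) < 1 \<and>
       (\<exists>k\<in>cantor a. \<bar>fst (snd (hg_inv a b g p)) - k\<bar> \<le> (1 + R) * a ^ n) \<and>
       0 \<le> fst (snd (snd (hg_inv a b g p))) \<and> fst (snd (snd (hg_inv a b g p))) < 1 \<and>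
       (\<exists>k\<in>cantor b. \<bar>snd (snd (snd (hg_inv a b g p))) - k\<bar> \<le> (1 + R) * b ^ n)"
proof -
  define S where "S = supnorm g"
  have S0: "0 \<le> S" using supnorm_nonneg[OF g] S_def by simp
  define R where "R = eM a + 1 + \<delta> + 2 * S / (1 - b)"
  have eM0: "0 < eM a" using eM_pos[OF a0 a1 b0 b1 g] .
  have R0: "0 \<le> R" using eM0 d0 S0 b1 unfolding R_def by simp
  obtain N0 where N0: "a ^ N0 < eM a / \<delta>" using real_arch_pow_inv[of "eM a / \<delta>" a] eM0 d0 a0 a1 by auto
  have N0': "a ^ N0 * \<delta> \<le> eM a" using N0 d0 by (simp add: field_simps)
  have "0 \<le> fst (hg_inv a b g p) \<and> fst (hg_inv a b g p) < 1 \<and>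
       (\<exists>k\<in>cantor a. \<bar>fst (snd (hg_inv a b g p)) - k\<bar> \<le> (1 + R) * a ^ n) \<and>
       0 \<le> fst (snd (snd (hg_inv a b g p))) \<and> fst (snd (snd (hg_inv a b g p))) < 1 \<and>
       (\<exists>k\<in>cantor b. \<bar>snd (snd (snd (hg_inv a b g p))) - k\<bar> \<le> (1 + R) * b ^ n)" for n
  proof -
    have "p \<in> (Bg a b g ^^ (n + N0)) ` trapV b g \<delta>" using p unfolding Ag_def by blast
    then obtain q0 where q0: "q0 \<in> trapV b g \<delta>" "p = (Bg a b g ^^ (n + N0)) q0" by blast
    define q where "q = (Bg a b g ^^ N0) q0"
    have pq: "p = (Bg a b g ^^ n) q" unfolding q_def q0(2) by (simp add: funpow_add)
    have qV: "q \<in> trapV b g \<delta>" unfolding q_def using V_iter[OF q0(1)] .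
    obtain x y z w where qq: "q = (x, y, z, w)" by (cases q)
    obtain x0 y0 z0 w0 where qq0: "q0 = (x0, y0, z0, w0)" by (cases q0)
    have "p12 q = (bak a ^^ N0) (p12 q0)" unfolding q_def by (rule Bg_iter_p12)
    then have xy: "(x, y) = (bak a ^^ N0) (x0, y0)" by (simp add: qq qq0 p12_def)
    have "0 \<le> fst ((bak a ^^ N0) (x0, y0)) \<and> fst ((bak a ^^ N0) (x0, y0)) < 1 \<and>
         -(a^N0*\<delta>) \<le> snd ((bak a ^^ N0) (x0, y0)) \<and> snd ((bak a ^^ N0) (x0, y0)) \<le> 1 + a^N0*\<delta>"
      by (rule bak_iter_interval[OF a0 a1]) (use q0 qq0 d0 in \<open>auto simp: trapV_def\<close>)
    then have yb: "0 \<le> x" "x < 1" "-(eM a) \<le> y" "y \<le> 1 + eM a" using xy[symmetric] N0' by auto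
    have hq: "z \<in> {0..<1}" "-\<delta> - S/(1-b) \<le> w" "w \<le> 1 + \<delta> + S/(1-b)"
      using qV qq by (auto simp: trapV_def S_def)
    have gq: "goodq a q" using yb qq by (simp add: goodq_def[OF a0 a1 b0 b1 g])
    have ci: "hg_inv a b g p = (Bg a b (\<lambda>_. 0) ^^ n) (hg_inv a b g q)"
      unfolding pq by (rule conj_iter[OF a0 a1 b0 b1 g gq])
    have phb: "\<bar>phi a b g (x, y)\<bar> \<le> S / (1 - b)"
      unfolding S_def by (rule phi_bound) (use b0 b1 g yb in auto)
    define u where "u = hg_inv a b g q"
    have uu: "u = (x, y, z, w - phi a b g (x, y))" unfolding u_def qq by (simp add: hg_inv_eq)
    have R1: "eM a \<le> R" "1 + \<delta> + 2 * S / (1 - b) \<le> R" using eM0 d0 S0 b1 unfolding R_def by auto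
    have wb: "-R \<le> w - phi a b g (x, y)" "w - phi a b g (x, y) \<le> 1 + R"
      using hq phb R1 by (auto simp: abs_le_iff)
    have A1: "0 \<le> fst ((bak a ^^ n) (x, y)) \<and> fst ((bak a ^^ n) (x, y)) < 1 \<and>
         (\<exists>k\<in>cantor a. \<bar>snd ((bak a ^^ n) (x, y)) - k\<bar> \<le> (1 + R) * a ^ n)"
      by (rule bak_iter_approx[OF a0 a1 R0]) (use yb R1 in auto)
    have A2: "0 \<le> fst ((bak b ^^ n) (z, w - phi a b g (x, y))) \<and> fst ((bak b ^^ n) (z, w - phi a b g (x, y))) < 1 \<and>
         (\<exists>k\<in>cantor b. \<bar>snd ((bak b ^^ n) (z, w - phi a b g (x, y))) - k\<bar> \<le> (1 + R) * b ^ n)"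
      by (rule bak_iter_approx[OF b0 b1 R0]) (use hq wb in auto)
    have e1: "p12 (hg_inv a b g p) = (bak a ^^ n) (x, y)"
      unfolding ci Bg_iter_p12 u_def[symmetric] uu by (simp add: p12_def)
    have e2: "p34 (hg_inv a b g p) = (bak b ^^ n) (z, w - phi a b g (x, y))"
      unfolding ci Bg_iter_p34 u_def[symmetric] uu by (simp add: p34_def)
    show ?thesis using A1 A2 unfolding e1[symmetric] e2[symmetric] by (simp add: p12_def p34_def)
  qed
  then show ?thesis using that R0 by blast
qed

lemma Ag_sub: "p \<in> Ag a b g \<delta> \<Longrightarrow> hg_inv a b g p \<in> bigA a b"
proof -
  assume p: "p \<in> Ag a b g \<delta>"
  obtain R where R: "0 \<le> R" "\<And>n. 0 \<le> fst (hg_inv a b g p) \<and> fst (hg_inv a b g p) < 1 \<and>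
       (\<exists>k\<in>cantor a. \<bar>fst (snd (hg_inv a b g p)) - k\<bar> \<le> (1 + R) * a ^ n) \<and>
       0 \<le> fst (snd (snd (hg_inv a b g p))) \<and> fst (snd (snd (hg_inv a b g p))) < 1 \<and>
       (\<exists>k\<in>cantor b. \<bar>snd (snd (snd (hg_inv a b g p))) - k\<bar> \<le> (1 + R) * b ^ n)"
    using Ag_approx[OF p] by blast
  have "fst (snd (hg_inv a b g p)) \<in> cantor a"
    by (rule cantor_approx_mem[OF a0 a1, where c="1+R"]) (use R in blast)
  moreover have "snd (snd (snd (hg_inv a b g p))) \<in> cantor b"
    by (rule cantor_approx_mem[OF b0 b1, where c="1+R"]) (use R in blast)
  ultimately show ?thesis using R(2)[of 0] unfolding bigA_def by (cases "hg_inv a b g p") auto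
qed

lemma hg_image: "hg a b g ` bigA a b = Ag a b g \<delta>"
proof
  show "hg a b g ` bigA a b \<subseteq> Ag a b g \<delta>" by (rule hg_A_sub[OF a0 a1 b0 b1 g d0])
  show "Ag a b g \<delta> \<subseteq> hg a b g ` bigA a b"
  proof
    fix p assume "p \<in> Ag a b g \<delta>"
    then have "hg_inv a b g p \<in> bigA a b" by (rule Ag_sub)
    then show "p \<in> hg a b g ` bigA a b" using hg_hg_inv by (metis image_eqI)
  qed
qed

end



lemma dist_pair_le: "dist (x::real, y::real) (x', y') \<le> \<bar>x - x'\<bar> + \<bar>y - y'\<bar>"
  unfolding dist_Pair_Pair dist_real_def using sqrt_sum_squares_le_sum_abs by simp

lemma power_powr: "0 < a \<Longrightarrow> ((a::real) ^ n) powr r = (a powr r) ^ n"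
  by (simp add: powr_power powr_realpow[symmetric] powr_powr mult.commute)

lemma suminf_abs_bound:
  fixes h B :: "nat \<Rightarrow> real"
  assumes "\<And>i. \<bar>h i\<bar> \<le> B i" "summable B"
  shows "\<bar>suminf h\<bar> \<le> suminf B"
proof -
  have sh: "summable h" by (rule summable_comparison_test'[OF assms(2)]) (use assms(1) in auto)
  have "suminf h \<le> suminf B"
  proof (rule suminf_le[OF _ sh assms(2)])
    fix i show "h i \<le> B i" using assms(1)[of i] by (auto simp: abs_le_iff)
  qed
  moreover have "suminf (\<lambda>i. - B i) \<le> suminf h"
  proof (rule suminf_le[OF _ summable_minus[OF assms(2)] sh])
    fix i show "- B i \<le> h i" using assms(1)[of i] by (auto simp: abs_le_iff)
  qed
  ultimately show ?thesis using suminf_minus[OF assms(2)] by (auto simp: abs_le_iff)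
qed

context
  fixes a :: real
  assumes a0: "0 < a" and a1: "a < 1/2"
begin

lemma branch:
  assumes p: "p \<in> {0..<1} \<times> cantor a" and p': "p' \<in> {0..<1} \<times> cantor a"
  shows "(\<bar>fst ((bak_inv a ^^ k) p) - fst ((bak_inv a ^^ k) p')\<bar> \<le> \<bar>fst p - fst p'\<bar> \<and>
          \<bar>snd ((bak_inv a ^^ k) p) - snd ((bak_inv a ^^ k) p')\<bar> = \<bar>snd p - snd p'\<bar> / a ^ k)
         \<or> \<bar>snd p - snd p'\<bar> \<ge> a ^ k * (1 - 2*a)"
proof (induction k)
  case 0 then show ?case by simp
next
  case (Suc k)
  obtain u v where uv: "(bak_inv a ^^ k) p = (u, v)" by (cases "(bak_inv a ^^ k) p")
  obtain u' v' where uv': "(bak_inv a ^^ k) p' = (u', v')" by (cases "(bak_inv a ^^ k) p'")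
  have inA: "(u, v) \<in> {0..<1} \<times> cantor a" "(u', v') \<in> {0..<1} \<times> cantor a"
    using bak_inv_iter_in[OF a0 a1 p, of k] bak_inv_iter_in[OF a0 a1 p', of k] uv uv' by auto
  have ak: "a ^ Suc k * (1 - 2*a) \<le> a ^ k * (1 - 2*a)"
    using a0 a1 by (intro mult_right_mono) (auto simp: power_le_one mult_le_cancel_right1)
  have e1: "(bak_inv a ^^ Suc k) p = bak_inv a (u, v)" using uv by simp
  have e2: "(bak_inv a ^^ Suc k) p' = bak_inv a (u', v')" using uv' by simp
  from Suc show ?case
  proof
    assume H: "\<bar>fst ((bak_inv a ^^ k) p) - fst ((bak_inv a ^^ k) p')\<bar> \<le> \<bar>fst p - fst p'\<bar> \<and>
          \<bar>snd ((bak_inv a ^^ k) p) - snd ((bak_inv a ^^ k) p')\<bar> = \<bar>snd p - snd p'\<bar> / a ^ k"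
    then have H1: "\<bar>u - u'\<bar> \<le> \<bar>fst p - fst p'\<bar>" and H2: "\<bar>v - v'\<bar> = \<bar>snd p - snd p'\<bar> / a ^ k"
      using uv uv' by auto
    show ?thesis
    proof (cases "v \<le> 1/2 \<longleftrightarrow> v' \<le> 1/2")
      case True
      have d1: "\<bar>fst (bak_inv a (u, v)) - fst (bak_inv a (u', v'))\<bar> = \<bar>u - u'\<bar>/2"
        using True by (auto simp: bak_inv_def abs_divide diff_divide_distrib[symmetric])
      have d2: "\<bar>snd (bak_inv a (u, v)) - snd (bak_inv a (u', v'))\<bar> = \<bar>v - v'\<bar>/a"
        using True a0 by (auto simp: bak_inv_def abs_divide diff_divide_distrib[symmetric])
      have "\<bar>u - u'\<bar>/2 \<le> \<bar>u - u'\<bar>" by simp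
      then have "\<bar>u - u'\<bar>/2 \<le> \<bar>fst p - fst p'\<bar>" using H1 by (rule order_trans)
      moreover have "\<bar>v - v'\<bar>/a = \<bar>snd p - snd p'\<bar> / a ^ Suc k" using H2 by simp
      ultimately show ?thesis unfolding e1 e2 d1 d2 by blast
    next
      case False
      then have "(v \<le> a \<and> v' \<ge> 1 - a) \<or> (v' \<le> a \<and> v \<ge> 1 - a)"
        using cantor_low[OF a0 a1] cantor_high[OF a0 a1] inA by auto
      then have "\<bar>v - v'\<bar> \<ge> 1 - 2*a" by auto
      then have "\<bar>snd p - snd p'\<bar> \<ge> a ^ k * (1 - 2*a)" using H2 a0 by (simp add: field_simps)
      then show ?thesis using ak by auto
    qed
  next
    assume "\<bar>snd p - snd p'\<bar> \<ge> a ^ k * (1 - 2*a)"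
    then show ?thesis using ak by auto
  qed
qed

definition Mc :: "real \<Rightarrow> real \<Rightarrow> real" where "Mc L S = L + 2 * S / (1 - 2*a)"

lemma term_diff:
  fixes g :: "real \<times> real \<Rightarrow> real" and L S :: real
  assumes L: "0 \<le> L" "\<And>p q. p \<in> strip \<Longrightarrow> q \<in> strip \<Longrightarrow> \<bar>g p - g q\<bar> \<le> L * dist p q"
    and S: "0 \<le> S" "\<And>p. p \<in> strip \<Longrightarrow> \<bar>g p\<bar> \<le> S"
    and p: "p \<in> {0..<1} \<times> cantor a" and p': "p' \<in> {0..<1} \<times> cantor a"
  shows "\<bar>g ((bak_inv a ^^ k) p) - g ((bak_inv a ^^ k) p')\<bar>
          \<le> L * \<bar>fst p - fst p'\<bar> + Mc L S * min 1 (\<bar>snd p - snd p'\<bar> / a ^ k)"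
proof -
  define d where "d = \<bar>fst p - fst p'\<bar>"
  define t where "t = \<bar>snd p - snd p'\<bar>"
  define q where "q = (bak_inv a ^^ k) p"
  define q' where "q' = (bak_inv a ^^ k) p'"
  have qs: "q \<in> strip" "q' \<in> strip" using bak_inv_iter_in[OF a0 a1 p, of k] bak_inv_iter_in[OF a0 a1 p', of k]
    unfolding q_def q'_def strip_def by (auto simp: mem_Times_iff)
  have t0: "0 \<le> t" "0 \<le> d" unfolding t_def d_def by auto
  have ak: "0 < a ^ k" using a0 by simp
  have tak: "0 \<le> t / a ^ k" using t0 ak by simp
  have twoS: "\<bar>g q - g q'\<bar> \<le> 2 * S" using S(2)[OF qs(1)] S(2)[OF qs(2)] by linarith
  have "Mc L S * (1 - 2*a) = L * (1 - 2*a) + 2 * S" using a1 unfolding Mc_def by (simp add: field_simps)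
  moreover have "L * (1 - 2*a) \<ge> 0" using L(1) a1 by simp
  ultimately have M1: "2 * S \<le> Mc L S * (1 - 2*a)" by simp
  have "2*S*(1-2*a) \<le> 2*S" using a0 a1 S(1) by (simp add: mult_left_le)
  then have "2*S \<le> 2*S/(1-2*a)" using a1 by (simp add: le_divide_eq)
  then have M2: "2 * S \<le> Mc L S" using L(1) unfolding Mc_def by simp
  have LM: "L \<le> Mc L S" using a1 S(1) unfolding Mc_def by simp
  have "min 1 (t / a ^ k) \<ge> 0" using tak by simp
  then have Mm: "0 \<le> Mc L S * min 1 (t / a ^ k)" using LM L(1) by simp
  from branch[OF p p', of k]
  show ?thesis unfolding q_def[symmetric] q'_def[symmetric] d_def[symmetric] t_def[symmetric]
  proof
    assume H: "\<bar>fst q - fst q'\<bar> \<le> d \<and> \<bar>snd q - snd q'\<bar> = t / a ^ k"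
    have "\<bar>g q - g q'\<bar> \<le> L * dist q q'" using L(2) qs by blast
    also have "dist q q' \<le> \<bar>fst q - fst q'\<bar> + \<bar>snd q - snd q'\<bar>"
      using dist_pair_le[of "fst q" "snd q" "fst q'" "snd q'"] by simp
    then have "L * dist q q' \<le> L * (d + t / a ^ k)" using H L(1) by (intro mult_left_mono) auto
    finally have c1: "\<bar>g q - g q'\<bar> \<le> L * d + L * (t / a ^ k)" by (simp add: algebra_simps)
    show "\<bar>g q - g q'\<bar> \<le> L * d + Mc L S * min 1 (t / a ^ k)"
    proof (cases "t / a ^ k \<le> 1")
      case True
      have "L * (t / a ^ k) \<le> Mc L S * (t / a ^ k)" using LM tak by (intro mult_right_mono) auto
      then show ?thesis using c1 True by simp
    next
      case False
      have "L * d \<ge> 0" using L(1) t0 by simp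
      then show ?thesis using twoS M2 False by simp
    qed
  next
    assume H: "t \<ge> a ^ k * (1 - 2*a)"
    then have "t / a ^ k \<ge> 1 - 2*a" using ak by (simp add: le_divide_eq mult.commute)
    moreover have "1 - 2*a \<le> 1" using a0 by simp
    ultimately have "min 1 (t / a ^ k) \<ge> 1 - 2*a" by simp
    then have "Mc L S * (1 - 2*a) \<le> Mc L S * min 1 (t / a ^ k)"
      using LM L(1) by (intro mult_left_mono) auto
    moreover have "L * d \<ge> 0" using L(1) t0 by simp
    ultimately show "\<bar>g q - g q'\<bar> \<le> L * d + Mc L S * min 1 (t / a ^ k)" using twoS M1 by linarith
  qed
qed

end

definition Fs :: "real \<Rightarrow> real \<Rightarrow> real \<Rightarrow> real" where
  "Fs a b t = (\<Sum>i. b ^ i * min 1 (t / a ^ Suc i))"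

lemma Fs_summable:
  fixes a b t :: real
  assumes "0 < a" "0 < b" "b < 1" "0 \<le> t"
  shows "summable (\<lambda>i. b ^ i * min 1 (t / a ^ Suc i))"
proof (rule summable_comparison_test')
  show "summable (\<lambda>i. b ^ i)" using assms by simp
  fix n :: nat
  have "0 \<le> min 1 (t / a ^ Suc n)" using assms by simp
  then show "norm (b ^ n * min 1 (t / a ^ Suc n)) \<le> b ^ n" using assms
    by (auto simp: abs_mult mult_le_cancel_left1)
qed

lemma phi_diff:
  fixes a b :: real and g :: "real \<times> real \<Rightarrow> real"
  assumes a0: "0 < a" and a1: "a < 1/2" and b0: "0 < b" and b1: "b < 1" and g: "Cb1 g"
  obtains L M where "0 \<le> L" "0 \<le> M" "\<And>p p'. p \<in> {0..<1} \<times> cantor a \<Longrightarrow> p' \<in> {0..<1} \<times> cantor a \<Longrightarrow>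
      \<bar>phi a b g p - phi a b g p'\<bar> \<le> L * \<bar>fst p - fst p'\<bar> + M * Fs a b \<bar>snd p - snd p'\<bar>"
proof -
  obtain L where L: "0 \<le> L" "\<And>p q. p \<in> strip \<Longrightarrow> q \<in> strip \<Longrightarrow> \<bar>g p - g q\<bar> \<le> L * dist p q"
    using Cb1_lipschitz[OF g] by blast
  define S where "S = supnorm g"
  have S: "0 \<le> S" "\<And>p. p \<in> strip \<Longrightarrow> \<bar>g p\<bar> \<le> S" using supnorm_nonneg[OF g] Cb1_bounded[OF g] S_def by auto
  define M where "M = Mc a L S"
  have M0: "0 \<le> M" unfolding M_def Mc_def[OF a0 a1] using L(1) S(1) a1 by simp
  show ?thesis
  proof (rule that[of "L / (1 - b)" M])
    show "0 \<le> L / (1 - b)" using L(1) b1 by simp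
    show "0 \<le> M" by (rule M0)
    fix p p' :: "real \<times> real" assume p: "p \<in> {0..<1} \<times> cantor a" and p': "p' \<in> {0..<1} \<times> cantor a"
    define d where "d = \<bar>fst p - fst p'\<bar>"
    define t where "t = \<bar>snd p - snd p'\<bar>"
    have fp: "fst p \<in> {0..<1}" "fst p' \<in> {0..<1}" using p p' by auto
    have s1: "summable (\<lambda>i. b ^ i * g ((bak_inv a ^^ Suc i) p))" by (rule phi_summable[OF b0 b1 g fp(1)])
    have s2: "summable (\<lambda>i. b ^ i * g ((bak_inv a ^^ Suc i) p'))" by (rule phi_summable[OF b0 b1 g fp(2)])
    have sF: "summable (\<lambda>i. b ^ i * min 1 (t / a ^ Suc i))" by (rule Fs_summable) (use a0 b0 b1 t_def in auto)
    have sG: "summable (\<lambda>i. b ^ i * (L * d))" using b0 b1 by (intro summable_mult2) auto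
    have "phi a b g p - phi a b g p' = (\<Sum>i. b ^ i * g ((bak_inv a ^^ Suc i) p) - b ^ i * g ((bak_inv a ^^ Suc i) p'))"
      unfolding phi_def using suminf_diff[OF s1 s2] by simp
    also have "\<bar>\<dots>\<bar> \<le> (\<Sum>i. b ^ i * (L * d) + M * (b ^ i * min 1 (t / a ^ Suc i)))"
    proof (rule suminf_abs_bound)
      fix i
      have "\<bar>g ((bak_inv a ^^ Suc i) p) - g ((bak_inv a ^^ Suc i) p')\<bar> \<le> L * d + M * min 1 (t / a ^ Suc i)"
        unfolding M_def d_def t_def by (rule term_diff[OF a0 a1 L S p p'])
      then have bb: "b ^ i * \<bar>g ((bak_inv a ^^ Suc i) p) - g ((bak_inv a ^^ Suc i) p')\<bar> \<le> b ^ i * (L * d + M * min 1 (t / a ^ Suc i))"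
        using b0 by (intro mult_left_mono) auto
      show "\<bar>b ^ i * g ((bak_inv a ^^ Suc i) p) - b ^ i * g ((bak_inv a ^^ Suc i) p')\<bar>
          \<le> b ^ i * (L * d) + M * (b ^ i * min 1 (t / a ^ Suc i))"
      proof -
        have "\<bar>b ^ i * g ((bak_inv a ^^ Suc i) p) - b ^ i * g ((bak_inv a ^^ Suc i) p')\<bar>
             = b ^ i * \<bar>g ((bak_inv a ^^ Suc i) p) - g ((bak_inv a ^^ Suc i) p')\<bar>"
          using b0 by (simp add: abs_mult right_diff_distrib[symmetric])
        moreover have "b ^ i * (L * d + M * min 1 (t / a ^ Suc i)) = b ^ i * (L * d) + M * (b ^ i * min 1 (t / a ^ Suc i))"
          by (simp add: algebra_simps)
        ultimately show ?thesis using bb by simp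
      qed
      show "summable (\<lambda>i. b ^ i * (L * d) + M * (b ^ i * min 1 (t / a ^ Suc i)))"
        by (intro summable_add sG summable_mult sF)
    qed
    also have "\<dots> = (\<Sum>i. b ^ i * (L * d)) + M * Fs a b t"
      unfolding Fs_def using suminf_add[OF sG summable_mult[OF sF, of M]] suminf_mult[OF sF, of M] by simp
    also have "(\<Sum>i. b ^ i * (L * d)) = L / (1 - b) * d"
      using suminf_geometric[of b] suminf_mult2[of "\<lambda>i. b^i" "L * d"] b0 b1 by auto
    finally show "\<bar>phi a b g p - phi a b g p'\<bar> \<le> L / (1 - b) * \<bar>fst p - fst p'\<bar> + M * Fs a b \<bar>snd p - snd p'\<bar>"
      unfolding d_def t_def .
  qed
qed



lemma min_powr:
  fixes s r :: real
  assumes "0 \<le> s" "0 < r" "r \<le> 1"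
  shows "min 1 s \<le> s powr r"
proof (cases "s \<le> 1")
  case True
  show ?thesis
  proof (cases "s = 0")
    case False
    then have "s powr 1 \<le> s powr r" using powr_mono'[of r 1 s] assms True by simp
    then show ?thesis using False assms by simp
  qed simp
next
  case False
  then show ?thesis using ge_one_powr_ge_zero[of s r] assms by simp
qed

lemma Fs_bound1:
  fixes a b r t :: real
  assumes a: "0 < a" and b: "0 < b" "b < 1" and r: "0 < r" "r \<le> 1" and ba: "b < a powr r" and t: "0 \<le> t"
  shows "Fs a b t \<le> t powr r / (a powr r - b)"
proof -
  define A where "A = a powr r"
  have A0: "0 < A" using a by (simp add: A_def)
  have q: "0 \<le> b / A" "b / A < 1" using ba b A0 by (auto simp: A_def)
  have e: "b ^ i * (t / a ^ Suc i) powr r = (t powr r / A) * (b / A) ^ i" for i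
  proof -
    have "(t / a ^ Suc i) powr r = t powr r / A ^ Suc i"
      using a t by (simp add: powr_divide power_powr A_def del: power_Suc)
    then show ?thesis using A0 by (simp add: power_divide field_simps)
  qed
  have sG: "summable (\<lambda>i. (t powr r / A) * (b / A) ^ i)" using q by (intro summable_mult) simp
  have "Fs a b t \<le> (\<Sum>i. (t powr r / A) * (b / A) ^ i)"
    unfolding Fs_def
  proof (rule suminf_le[OF _ Fs_summable[OF a b t] sG])
    fix i
    have "min 1 (t / a ^ Suc i) \<le> (t / a ^ Suc i) powr r" by (rule min_powr) (use a t r in auto)
    then have "b ^ i * min 1 (t / a ^ Suc i) \<le> b ^ i * (t / a ^ Suc i) powr r"
      using b by (intro mult_left_mono) auto
    then show "b ^ i * min 1 (t / a ^ Suc i) \<le> (t powr r / A) * (b / A) ^ i" using e by simp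
  qed
  also have "\<dots> = (t powr r / A) * (1 / (1 - b / A))"
    using suminf_mult[of "\<lambda>i. (b/A)^i" "t powr r / A"] suminf_geometric[of "b/A"] q by simp
  also have "\<dots> = t powr r / (A - b)" using A0 ba by (simp add: A_def field_simps)
  finally show ?thesis by (simp add: A_def)
qed

lemma Fs_zero: "Fs a b 0 = 0"
  by (simp add: Fs_def)

lemma Fs_bound3:
  fixes a b t :: real
  assumes a: "0 < a" "a < b" and b: "b < 1" and t: "0 \<le> t" "t \<le> 1"
  shows "Fs a b t \<le> ((1 / (b - a) + 1 / (1 - b)) / b) * t powr (ln b / ln a)"
proof (cases "t = 0")
  case True then show ?thesis by (simp add: Fs_zero)
next
  case False
  then have t0: "0 < t" using t by simp
  define r where "r = ln b / ln a"
  have b0: "0 < b" using a by simp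
  have lna: "ln a < 0" using a b by simp
  have lnb: "ln b < 0" using b b0 by simp
  have r0: "0 < r" unfolding r_def using lna lnb by (simp add: divide_neg_neg)
  have apr: "a powr r = b"
    using a lna b0 by (simp add: powr_def r_def)
  obtain n0 where n0: "a ^ n0 < t" using real_arch_pow_inv[of t a] t0 a b by auto
  define N where "N = (LEAST n. a ^ n < t)"
  have N1: "a ^ N < t" unfolding N_def using n0 by (rule LeastI)
  have N0: "N \<noteq> 0" using N1 t by (metis power_0 not_less)
  define m where "m = N - 1"
  have Nm: "N = Suc m" using N0 m_def by simp
  have am: "t \<le> a ^ m"
  proof (rule ccontr)
    assume "\<not> t \<le> a ^ m"
    then have "a ^ m < t" by simp
    then have "N \<le> m" unfolding N_def by (rule Least_le)
    then show False using Nm by simp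
  qed
  have am1: "a ^ Suc m < t" using N1 Nm by simp
  define f where "f i = b ^ i * min 1 (t / a ^ Suc i)" for i
  have sf: "summable f" unfolding f_def by (rule Fs_summable) (use a b t in auto)
  have split: "Fs a b t = (\<Sum>i. f (i + m)) + (\<Sum>i<m. f i)"
    unfolding Fs_def f_def[symmetric] by (rule suminf_split_initial_segment[OF sf])
  have head: "(\<Sum>i<m. f i) \<le> b ^ m / (b - a)"
  proof -
    have "(\<Sum>i<m. f i) \<le> (\<Sum>i<m. (t / a) * (b / a) ^ i)"
    proof (rule sum_mono)
      fix i
      have "f i \<le> b ^ i * (t / a ^ Suc i)" unfolding f_def using b0 by (intro mult_left_mono) auto
      also have "\<dots> = (t / a) * (b / a) ^ i" using a by (simp add: power_divide field_simps)
      finally show "f i \<le> (t / a) * (b / a) ^ i" .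
    qed
    also have "\<dots> = (t / a) * (((b / a) ^ m - 1) / (b / a - 1))"
    proof -
      have "b / a \<noteq> 1" using a by simp
      then have "(\<Sum>i<m. (b / a) ^ i) = (1 - (b / a) ^ m) / (1 - b / a)"
        using a by (simp add: sum_gp_strict del: power_divide)
      also have "\<dots> = ((b / a) ^ m - 1) / (b / a - 1)" by (metis minus_diff_eq minus_divide_divide)
      finally have e1: "(\<Sum>i<m. (b / a) ^ i) = ((b / a) ^ m - 1) / (b / a - 1)" .
      have e2: "(\<Sum>i<m. (t / a) * (b / a) ^ i) = (t/a) * (\<Sum>i<m. (b / a) ^ i)"
        by (rule sum_distrib_left[symmetric])
      show ?thesis by (simp only: e1 e2)
    qed
    also have "\<dots> \<le> (t / a) * ((b / a) ^ m / (b / a - 1))"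
    proof -
      have "b / a - 1 > 0" using a by simp
      then show ?thesis using a t by (intro mult_left_mono divide_right_mono) auto
    qed
    also have "\<dots> = t * b ^ m / (a ^ m * (b - a))" using a by (simp add: power_divide field_simps)
    also have "\<dots> \<le> a ^ m * b ^ m / (a ^ m * (b - a))"
      using am a b0 by (intro divide_right_mono mult_right_mono) auto
    also have "\<dots> = b ^ m / (b - a)" using a by simp
    finally show ?thesis .
  qed
  have tail: "(\<Sum>i. f (i + m)) \<le> b ^ m / (1 - b)"
  proof -
    have sg: "summable (\<lambda>i. b ^ i * b ^ m)" using b0 b by (intro summable_mult2) simp
    have "(\<Sum>i. f (i + m)) \<le> (\<Sum>i. b ^ i * b ^ m)"
    proof (rule suminf_le[OF _ summable_ignore_initial_segment[OF sf] sg])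
      fix i
      have "0 \<le> min 1 (t / a ^ Suc (i + m))" using a t by simp
      then have "f (i + m) \<le> b ^ (i + m)" unfolding f_def using b0 by (simp add: mult_le_cancel_left1)
      then show "f (i + m) \<le> b ^ i * b ^ m" by (simp add: power_add)
    qed
    also have "\<dots> = b ^ m / (1 - b)"
      using suminf_mult2[of "\<lambda>i. b^i" "b^m"] suminf_geometric[of b] b0 b by simp
    finally show ?thesis .
  qed
  have bm: "b ^ m \<le> t powr r / b"
  proof -
    have "(a ^ Suc m) powr r < t powr r" using am1 r0 a by (intro powr_less_mono2) auto
    moreover have "(a ^ Suc m) powr r = b ^ Suc m" by (simp only: power_powr[OF a(1)] apr)
    ultimately have "b * b ^ m < t powr r" by simp
    then show ?thesis using b0 by (simp add: field_simps)
  qed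
  have "Fs a b t \<le> b ^ m * (1 / (b - a) + 1 / (1 - b))"
    using split head tail by (simp add: field_simps)
  also have "\<dots> \<le> (t powr r / b) * (1 / (b - a) + 1 / (1 - b))"
    using bm a b by (intro mult_right_mono) auto
  finally show ?thesis by (simp add: r_def field_simps)
qed



type_synonym pt = "real \<times> real \<times> real \<times> real"

lemma dist4_le:
  "dist ((x::real), (y::real), (z::real), (w::real)) (x', y', z', w') \<le> \<bar>x - x'\<bar> + \<bar>y - y'\<bar> + \<bar>z - z'\<bar> + \<bar>w - w'\<bar>"
proof -
  have "dist (x, y, z, w) (x', y', z', w') = norm (x - x', y - y', z - z', w - w')" by (simp add: dist_norm)
  also have "\<dots> \<le> norm (x - x') + norm (y - y', z - z', w - w')" by (rule norm_Pair_le)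
  also have "norm (y - y', z - z', w - w') \<le> norm (y - y') + norm (z - z', w - w')" by (rule norm_Pair_le)
  also have "norm (z - z', w - w') \<le> norm (z - z') + norm (w - w')" by (rule norm_Pair_le)
  finally show ?thesis by simp
qed

lemma dist4_x: "\<bar>(x::real) - x'\<bar> \<le> dist (x, (y::real), (z::real), (w::real)) (x', y', z', w')"
  using dist_fst_le[of "(x, y, z, w)" "(x', y', z', w')"] by (simp add: dist_real_def)

lemma dist4_y: "\<bar>(y::real) - y'\<bar> \<le> dist ((x::real), y, (z::real), (w::real)) (x', y', z', w')"
  using dist_fst_le[of "(y, z, w)" "(y', z', w')"] dist_snd_le[of "(x, y, z, w)" "(x', y', z', w')"]
  by (simp add: dist_real_def)

lemma dist4_shift:
  "dist ((x::real), (y::real), (z::real), (w::real) + c) (x', y', z', w' + c') \<le> dist (x, y, z, w) (x', y', z', w') + \<bar>c - c'\<bar>"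
proof -
  have "dist (x, y, z, w + c) (x', y', z', w' + c') = norm ((x - x', y - y', z - z', w - w') + (0, 0, 0, c - c'))"
    by (simp add: dist_norm algebra_simps)
  also have "\<dots> \<le> norm (x - x', y - y', z - z', w - w') + norm ((0::real), (0::real), (0::real), c - c')"
    by (rule norm_triangle_ineq)
  also have "norm ((0::real), (0::real), (0::real), c - c') = \<bar>c - c'\<bar>" by (simp add: norm_Pair)
  finally show ?thesis by (simp add: dist_norm)
qed

lemma holder_from:
  fixes f :: "'a::metric_space \<Rightarrow> 'b::metric_space"
  assumes r: "0 < r" "r \<le> 1" and C: "0 \<le> C1" "0 \<le> C2" and Dm: "0 \<le> Dm" "\<And>u v. u \<in> S \<Longrightarrow> v \<in> S \<Longrightarrow> dist u v \<le> Dm"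
    and H: "\<And>u v. u \<in> S \<Longrightarrow> v \<in> S \<Longrightarrow> dist (f u) (f v) \<le> C1 * dist u v + C2 * dist u v powr r"
  shows "holder_on S f r"
  unfolding holder_on_def
proof (intro exI[of _ "C1 * Dm powr (1 - r) + C2"] ballI)
  fix u v assume uv: "u \<in> S" "v \<in> S"
  define D where "D = dist u v"
  have "D \<le> Dm powr (1 - r) * D powr r"
  proof (cases "D = 0")
    case False
    then have D0: "0 < D" unfolding D_def by simp
    have "D = D powr ((1 - r) + r)" using D0 by simp
    also have "\<dots> = D powr (1 - r) * D powr r" by (rule powr_add)
    also have "\<dots> \<le> Dm powr (1 - r) * D powr r"
      using Dm(2)[OF uv] D0 r by (intro mult_right_mono powr_mono2) (auto simp: D_def)
    finally show ?thesis .
  qed simp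
  then have "C1 * D \<le> C1 * (Dm powr (1 - r) * D powr r)" using C by (intro mult_left_mono) auto
  then show "dist (f u) (f v) \<le> (C1 * Dm powr (1 - r) + C2) * dist u v powr r"
    using H[OF uv] unfolding D_def[symmetric] by (simp add: algebra_simps)
qed

context
  fixes a b :: real and g :: "real \<times> real \<Rightarrow> real" and \<delta> :: real
  assumes a0: "0 < a" and a1: "a < 1/2" and b0: "0 < b" and b1: "b < 1/2" and g: "Cb1 g"
    and d0: "0 < \<delta>"
begin

lemma bigA_iff: "(x, y, z, w) \<in> bigA a b \<longleftrightarrow> (x, y) \<in> {0..<1} \<times> cantor a \<and> z \<in> {0..<1} \<and> w \<in> cantor b"
  by (auto simp: bigA_def)

lemma Ag_p12:
  assumes "(x, y, z, w) \<in> Ag a b g \<delta>"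
  shows "(x, y) \<in> {0..<1} \<times> cantor a"
  using Ag_sub[OF a0 a1 b0 b1 g d0 assms] by (simp add: hg_inv_eq bigA_def)

lemma Ag_V: "Ag a b g \<delta> \<subseteq> trapV b g \<delta>"
proof -
  have "Ag a b g \<delta> \<subseteq> (Bg a b g ^^ 0) ` trapV b g \<delta>" unfolding Ag_def by blast
  then show ?thesis by simp
qed

lemma Ag_bounded:
  obtains Dm where "0 \<le> Dm" "\<And>u v. u \<in> Ag a b g \<delta> \<Longrightarrow> v \<in> Ag a b g \<delta> \<Longrightarrow> dist u v \<le> Dm"
proof -
  define T where "T = \<delta> + supnorm g / (1 - b)"
  have T0: "0 \<le> T" using d0 supnorm_nonneg[OF g] b1 by (simp add: T_def)
  show ?thesis
  proof (rule that[of "4 + 4 * T"])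
    show "0 \<le> 4 + 4 * T" using T0 by simp
    fix u v assume uv: "u \<in> Ag a b g \<delta>" "v \<in> Ag a b g \<delta>"
    obtain x y z w where u: "u = (x, y, z, w)" by (cases u)
    obtain x' y' z' w' where v: "v = (x', y', z', w')" by (cases v)
    have "u \<in> trapV b g \<delta>" "v \<in> trapV b g \<delta>" using uv Ag_V by auto
    then have h: "x \<in> {0..<1}" "x' \<in> {0..<1}" "z \<in> {0..<1}" "z' \<in> {0..<1}"
      "-\<delta> \<le> y" "y \<le> 1 + \<delta>" "-\<delta> \<le> y'" "y' \<le> 1 + \<delta>"
      "-T \<le> w" "w \<le> 1 + T" "-T \<le> w'" "w' \<le> 1 + T"
      using u v by (auto simp: trapV_def T_def)
    have "dist u v \<le> \<bar>x - x'\<bar> + \<bar>y - y'\<bar> + \<bar>z - z'\<bar> + \<bar>w - w'\<bar>" unfolding u v by (rule dist4_le)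
    also have "\<dots> \<le> 4 + 4 * T"
    proof -
      have dT: "\<delta> \<le> T" using supnorm_nonneg[OF g] b1 by (simp add: T_def)
      have "\<bar>x - x'\<bar> \<le> 1" "\<bar>z - z'\<bar> \<le> 1" "\<bar>y - y'\<bar> \<le> 1 + 2*T" "\<bar>w - w'\<bar> \<le> 1 + 2*T"
        using h dT by (auto simp: abs_le_iff)
      then show ?thesis by linarith
    qed
    finally show "dist u v \<le> 4 + 4 * T" .
  qed
qed

lemma A_bounded: "u \<in> bigA a b \<Longrightarrow> v \<in> bigA a b \<Longrightarrow> dist u v \<le> 4"
proof -
  assume uv: "u \<in> bigA a b" "v \<in> bigA a b"
  obtain x y z w where u: "u = (x, y, z, w)" by (cases u)
  obtain x' y' z' w' where v: "v = (x', y', z', w')" by (cases v)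
  have h: "x \<in> {0..1}" "x' \<in> {0..1}" "z \<in> {0..1}" "z' \<in> {0..1}" "y \<in> {0..1}" "y' \<in> {0..1}" "w \<in> {0..1}" "w' \<in> {0..1}"
    using uv u v cantor_sub[OF a0 a1] cantor_sub[OF b0 b1] by (auto simp: bigA_def)
  have "dist u v \<le> \<bar>x - x'\<bar> + \<bar>y - y'\<bar> + \<bar>z - z'\<bar> + \<bar>w - w'\<bar>" unfolding u v by (rule dist4_le)
  also have "\<dots> \<le> 4" using h by (auto simp: abs_le_iff)
  finally show "dist u v \<le> 4" .
qed

lemma est_hg:
  fixes L M :: real
  assumes PD: "\<And>p p'. p \<in> {0..<1} \<times> cantor a \<Longrightarrow> p' \<in> {0..<1} \<times> cantor a \<Longrightarrow>
      \<bar>phi a b g p - phi a b g p'\<bar> \<le> L * \<bar>fst p - fst p'\<bar> + M * Fs a b \<bar>snd p - snd p'\<bar>"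
    and uv: "u \<in> bigA a b" "v \<in> bigA a b"
  shows "dist (hg a b g u) (hg a b g v) \<le> dist u v + L * \<bar>fst u - fst v\<bar> + M * Fs a b \<bar>fst (snd u) - fst (snd v)\<bar>"
    and "dist u v \<le> dist (hg a b g u) (hg a b g v) + L * \<bar>fst u - fst v\<bar> + M * Fs a b \<bar>fst (snd u) - fst (snd v)\<bar>"
proof -
  obtain x y z w where u: "u = (x, y, z, w)" by (cases u)
  obtain x' y' z' w' where v: "v = (x', y', z', w')" by (cases v)
  have p: "(x, y) \<in> {0..<1} \<times> cantor a" "(x', y') \<in> {0..<1} \<times> cantor a" using uv u v by (auto simp: bigA_def)
  have ph: "\<bar>phi a b g (x, y) - phi a b g (x', y')\<bar> \<le> L * \<bar>x - x'\<bar> + M * Fs a b \<bar>y - y'\<bar>"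
    using PD[OF p] by simp
  show "dist (hg a b g u) (hg a b g v) \<le> dist u v + L * \<bar>fst u - fst v\<bar> + M * Fs a b \<bar>fst (snd u) - fst (snd v)\<bar>"
    using dist4_shift[of x y z w "phi a b g (x, y)" x' y' z' w' "phi a b g (x', y')"] ph
    unfolding u v by (simp add: hg_eq)
  have "dist (x, y, z, (w + phi a b g (x, y)) + (- phi a b g (x, y))) (x', y', z', (w' + phi a b g (x', y')) + (- phi a b g (x', y')))
     \<le> dist (x, y, z, w + phi a b g (x, y)) (x', y', z', w' + phi a b g (x', y')) + \<bar>- phi a b g (x, y) - - phi a b g (x', y')\<bar>"
    by (rule dist4_shift)
  then show "dist u v \<le> dist (hg a b g u) (hg a b g v) + L * \<bar>fst u - fst v\<bar> + M * Fs a b \<bar>fst (snd u) - fst (snd v)\<bar>"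
    using ph unfolding u v by (simp add: hg_eq)
qed

lemma est_hg_inv:
  fixes L M :: real
  assumes PD: "\<And>p p'. p \<in> {0..<1} \<times> cantor a \<Longrightarrow> p' \<in> {0..<1} \<times> cantor a \<Longrightarrow>
      \<bar>phi a b g p - phi a b g p'\<bar> \<le> L * \<bar>fst p - fst p'\<bar> + M * Fs a b \<bar>snd p - snd p'\<bar>"
    and uv: "u \<in> Ag a b g \<delta>" "v \<in> Ag a b g \<delta>"
  shows "dist (hg_inv a b g u) (hg_inv a b g v) \<le> dist u v + L * \<bar>fst u - fst v\<bar> + M * Fs a b \<bar>fst (snd u) - fst (snd v)\<bar>"
proof -
  obtain x y z w where u: "u = (x, y, z, w)" by (cases u)
  obtain x' y' z' w' where v: "v = (x', y', z', w')" by (cases v)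
  have p: "(x, y) \<in> {0..<1} \<times> cantor a" "(x', y') \<in> {0..<1} \<times> cantor a"
    using Ag_p12 uv u v by auto
  have ph: "\<bar>phi a b g (x, y) - phi a b g (x', y')\<bar> \<le> L * \<bar>x - x'\<bar> + M * Fs a b \<bar>y - y'\<bar>"
    using PD[OF p] by simp
  show ?thesis
    using dist4_shift[of x y z w "- phi a b g (x, y)" x' y' z' w' "- phi a b g (x', y')"] ph
    unfolding u v by (simp add: hg_inv_eq)
qed

lemma fst_le_dist: "\<bar>fst u - fst v\<bar> \<le> dist u (v::pt)"
  by (cases u, cases v) (simp only: fst_conv dist4_x)

lemma snd_le_dist: "\<bar>fst (snd u) - fst (snd v)\<bar> \<le> dist u (v::pt)"
  by (cases u, cases v) (simp only: fst_conv snd_conv dist4_y)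

lemma hg_fst: "fst (hg a b g u) = fst u" "fst (snd (hg a b g u)) = fst (snd u)"
  by (cases u; simp add: hg_eq)+

end



context
  fixes a b :: real and g :: "real \<times> real \<Rightarrow> real" and \<delta> :: real
  assumes a0: "0 < a" and a1: "a < 1/2" and b0: "0 < b" and b1: "b < 1/2" and g: "Cb1 g"
    and d0: "0 < \<delta>"
begin

lemma A_t: "u \<in> bigA a b \<Longrightarrow> fst (snd u) \<in> {0..1}"
  using cantor_sub[OF a0 a1] by (cases u) (auto simp: bigA_def)

lemma Ag_t: "u \<in> Ag a b g \<delta> \<Longrightarrow> fst (snd u) \<in> {0..1}"
proof -
  assume u: "u \<in> Ag a b g \<delta>"
  obtain x y z w where uu: "u = (x, y, z, w)" by (cases u)
  have "y \<in> cantor a" using Ag_p12[OF a0 a1 b0 b1 g d0] u uu by blast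
  then show ?thesis using cantor_sub[OF a0 a1] uu by auto
qed

lemma t_le1: "(x::real) \<in> {0..1} \<Longrightarrow> y \<in> {0..1} \<Longrightarrow> \<bar>x - y\<bar> \<le> 1"
  by (cases "x \<le> y") auto

lemma gen_est:
  fixes r K L M D t :: real
  assumes r: "0 < r" and K: "0 \<le> K" and L: "0 \<le> L" and M: "0 \<le> M"
    and F: "Fs a b t \<le> K * t powr r" and t: "0 \<le> t" "t \<le> D" and x: "0 \<le> xx" "xx \<le> D"
  shows "D + L * xx + M * Fs a b t \<le> (1 + L) * D + (M * K) * D powr r"
proof -
  have "t powr r \<le> D powr r" using t r by (intro powr_mono2) auto
  then have "M * Fs a b t \<le> M * (K * D powr r)" using F M K
    by (meson mult_left_mono order_trans)
  moreover have "L * xx \<le> L * D" using L x by (intro mult_left_mono) auto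
  ultimately show ?thesis by (simp add: algebra_simps)
qed

lemma hg_holder_gen:
  assumes r: "0 < r" "r \<le> 1" and K: "0 \<le> K" and F: "\<And>t. 0 \<le> t \<Longrightarrow> t \<le> 1 \<Longrightarrow> Fs a b t \<le> K * t powr r"
  shows "holder_on (bigA a b) (hg a b g) r"
proof -
  obtain L M where LM: "0 \<le> L" "0 \<le> M" "\<And>p p'. p \<in> {0..<1} \<times> cantor a \<Longrightarrow> p' \<in> {0..<1} \<times> cantor a \<Longrightarrow>
      \<bar>phi a b g p - phi a b g p'\<bar> \<le> L * \<bar>fst p - fst p'\<bar> + M * Fs a b \<bar>snd p - snd p'\<bar>"
  proof -
    have "b < 1" using b1 by simp
    then show ?thesis using phi_diff[OF a0 a1 b0 _ g] that by blast
  qed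
  show ?thesis
  proof (rule holder_from[OF r _ _ _ A_bounded[OF a0 a1 b0 b1 g d0]])
    show "0 \<le> 1 + L" "0 \<le> M * K" "0 \<le> (4::real)" using LM K by auto
    fix u v assume uv: "u \<in> bigA a b" "v \<in> bigA a b"
    have t1: "\<bar>fst (snd u) - fst (snd v)\<bar> \<le> 1" using A_t uv t_le1 by blast
    have "dist (hg a b g u) (hg a b g v) \<le> dist u v + L * \<bar>fst u - fst v\<bar> + M * Fs a b \<bar>fst (snd u) - fst (snd v)\<bar>"
      by (rule est_hg(1)[OF a0 a1 b0 b1 g d0 LM(3) uv])
    also have "\<dots> \<le> (1 + L) * dist u v + (M * K) * dist u v powr r"
      by (rule gen_est[OF r(1) K LM(1,2) F]) (use t1 fst_le_dist[OF a0 a1 b0 b1 g d0] snd_le_dist[OF a0 a1 b0 b1 g d0] in auto)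
    finally show "dist (hg a b g u) (hg a b g v) \<le> (1 + L) * dist u v + (M * K) * dist u v powr r" .
  qed
qed


lemma hg_inv_holder_gen:
  assumes r: "0 < r" "r \<le> 1" and K: "0 \<le> K" and F: "\<And>t. 0 \<le> t \<Longrightarrow> t \<le> 1 \<Longrightarrow> Fs a b t \<le> K * t powr r"
  shows "holder_on (Ag a b g \<delta>) (hg_inv a b g) r"
proof -
  obtain L M where LM: "0 \<le> L" "0 \<le> M" "\<And>p p'. p \<in> {0..<1} \<times> cantor a \<Longrightarrow> p' \<in> {0..<1} \<times> cantor a \<Longrightarrow>
      \<bar>phi a b g p - phi a b g p'\<bar> \<le> L * \<bar>fst p - fst p'\<bar> + M * Fs a b \<bar>snd p - snd p'\<bar>"
  proof -
    have "b < 1" using b1 by simp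
    then show ?thesis using phi_diff[OF a0 a1 b0 _ g] that by blast
  qed
  obtain Dm where Dm: "0 \<le> Dm" "\<And>u v. u \<in> Ag a b g \<delta> \<Longrightarrow> v \<in> Ag a b g \<delta> \<Longrightarrow> dist u v \<le> Dm"
    using Ag_bounded[OF a0 a1 b0 b1 g d0] by blast
  show ?thesis
  proof (rule holder_from[OF r _ _ Dm])
    show "0 \<le> 1 + L" "0 \<le> M * K" using LM K by auto
    fix u v assume uv: "u \<in> Ag a b g \<delta>" "v \<in> Ag a b g \<delta>"
    have t1: "\<bar>fst (snd u) - fst (snd v)\<bar> \<le> 1" using Ag_t uv t_le1 by blast
    have "dist (hg_inv a b g u) (hg_inv a b g v) \<le> dist u v + L * \<bar>fst u - fst v\<bar> + M * Fs a b \<bar>fst (snd u) - fst (snd v)\<bar>"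
      by (rule est_hg_inv[OF a0 a1 b0 b1 g d0 LM(3) uv])
    also have "\<dots> \<le> (1 + L) * dist u v + (M * K) * dist u v powr r"
      by (rule gen_est[OF r(1) K LM(1,2) F]) (use t1 fst_le_dist[OF a0 a1 b0 b1 g d0] snd_le_dist[OF a0 a1 b0 b1 g d0] in auto)
    finally show "dist (hg_inv a b g u) (hg_inv a b g v) \<le> (1 + L) * dist u v + (M * K) * dist u v powr r" .
  qed
qed

lemma hg_bilip:
  assumes ba: "b < a"
  shows "bilipschitz_on (bigA a b) (hg a b g)"
proof -
  obtain L M where LM: "0 \<le> L" "0 \<le> M" "\<And>p p'. p \<in> {0..<1} \<times> cantor a \<Longrightarrow> p' \<in> {0..<1} \<times> cantor a \<Longrightarrow>
      \<bar>phi a b g p - phi a b g p'\<bar> \<le> L * \<bar>fst p - fst p'\<bar> + M * Fs a b \<bar>snd p - snd p'\<bar>"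
  proof -
    have "b < 1" using b1 by simp
    then show ?thesis using phi_diff[OF a0 a1 b0 _ g] that by blast
  qed
  define K where "K = 1 / (a - b)"
  have K0: "0 \<le> K" using ba by (simp add: K_def)
  have F: "Fs a b t \<le> K * t powr 1" if "0 \<le> t" for t
    using Fs_bound1[OF a0 b0 _ _ _ _ that, of 1] ba b1 a0 that by (simp add: K_def)
  define C where "C = (1 + L) + M * K"
  have "0 \<le> M * K" using LM(2) K0 by simp
  then have C0: "C > 0" using LM(1) by (simp add: C_def)
  have "\<forall>u\<in>bigA a b. \<forall>v\<in>bigA a b.
      dist (hg a b g u) (hg a b g v) \<le> C * dist u v \<and> dist u v \<le> C * dist (hg a b g u) (hg a b g v)"
  proof (intro ballI conjI)
    fix u v assume uv: "u \<in> bigA a b" "v \<in> bigA a b"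
    have t1: "0 \<le> \<bar>fst (snd u) - fst (snd v)\<bar>" by simp
    have "dist (hg a b g u) (hg a b g v) \<le> dist u v + L * \<bar>fst u - fst v\<bar> + M * Fs a b \<bar>fst (snd u) - fst (snd v)\<bar>"
      by (rule est_hg(1)[OF a0 a1 b0 b1 g d0 LM(3) uv])
    also have "\<dots> \<le> (1 + L) * dist u v + (M * K) * dist u v powr 1"
      by (rule gen_est[OF _ K0 LM(1,2) F]) (use fst_le_dist[OF a0 a1 b0 b1 g d0] snd_le_dist[OF a0 a1 b0 b1 g d0] in auto)
    finally show "dist (hg a b g u) (hg a b g v) \<le> C * dist u v" by (simp add: C_def algebra_simps)
    have "dist u v \<le> dist (hg a b g u) (hg a b g v) + L * \<bar>fst u - fst v\<bar> + M * Fs a b \<bar>fst (snd u) - fst (snd v)\<bar>"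
      by (rule est_hg(2)[OF a0 a1 b0 b1 g d0 LM(3) uv])
    also have "\<dots> \<le> (1 + L) * dist (hg a b g u) (hg a b g v) + (M * K) * dist (hg a b g u) (hg a b g v) powr 1"
    proof (rule gen_est[OF _ K0 LM(1,2) F])
      show "\<bar>fst u - fst v\<bar> \<le> dist (hg a b g u) (hg a b g v)"
        using fst_le_dist[OF a0 a1 b0 b1 g d0, of "hg a b g u" "hg a b g v"] hg_fst[OF a0 a1 b0 b1 g d0] by simp
      show "\<bar>fst (snd u) - fst (snd v)\<bar> \<le> dist (hg a b g u) (hg a b g v)"
        using snd_le_dist[OF a0 a1 b0 b1 g d0, of "hg a b g u" "hg a b g v"] hg_fst[OF a0 a1 b0 b1 g d0] by simp
    qed auto
    finally show "dist u v \<le> C * dist (hg a b g u) (hg a b g v)" by (simp add: C_def algebra_simps)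
  qed
  then show ?thesis unfolding bilipschitz_on_def using C0 by blast
qed

end

theorem proposition3p3:
  fixes \<alpha> \<beta> \<delta> :: real and g :: "real \<times> real \<Rightarrow> real"
  assumes "0 < \<alpha>" "\<alpha> < 1/2" "0 < \<beta>" "\<beta> < 1/2" "Cb1 g" "0 < \<delta>"
  shows "(\<forall>(x, y, z, w)\<in>bigA \<alpha> \<beta>.
            (\<forall>i. (bak_inv \<alpha> ^^ i) (x, y) \<in> {0..<1} \<times> cantor \<alpha>) \<and>
            summable (\<lambda>i. \<beta> ^ i * g ((bak_inv \<alpha> ^^ Suc i) (x, y))))
       \<and> inj_on (hg \<alpha> \<beta> g) (bigA \<alpha> \<beta>)
       \<and> hg \<alpha> \<beta> g ` bigA \<alpha> \<beta> = Ag \<alpha> \<beta> g \<delta>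
       \<and> (\<forall>v\<in>bigA \<alpha> \<beta>. hg_inv \<alpha> \<beta> g (hg \<alpha> \<beta> g v) = v)
       \<and> (\<forall>v\<in>Ag \<alpha> \<beta> g \<delta>. hg_inv \<alpha> \<beta> g v \<in> bigA \<alpha> \<beta> \<and> hg \<alpha> \<beta> g (hg_inv \<alpha> \<beta> g v) = v)
       \<and> (\<forall>v\<in>bigA \<alpha> \<beta>. Bg \<alpha> \<beta> (\<lambda>_. 0) v = hg_inv \<alpha> \<beta> g (Bg \<alpha> \<beta> g (hg \<alpha> \<beta> g v)))
       \<and> (\<beta> < \<alpha> \<longrightarrow> bilipschitz_on (bigA \<alpha> \<beta>) (hg \<alpha> \<beta> g))
       \<and> (\<alpha> = \<beta> \<longrightarrow> (\<forall>\<rho>. 0 < \<rho> \<and> \<rho> < 1 \<longrightarrow>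
              holder_on (bigA \<alpha> \<beta>) (hg \<alpha> \<beta> g) \<rho> \<and>
              holder_on (Ag \<alpha> \<beta> g \<delta>) (hg_inv \<alpha> \<beta> g) \<rho>))
       \<and> (\<alpha> < \<beta> \<longrightarrow> holder_on (bigA \<alpha> \<beta>) (hg \<alpha> \<beta> g) (ln \<beta> / ln \<alpha>))"
proof -
  note A = assms(1-6)
  have b1': "\<beta> < 1" using assms(4) by simp
  have c1: "\<forall>(x, y, z, w)\<in>bigA \<alpha> \<beta>.
            (\<forall>i. (bak_inv \<alpha> ^^ i) (x, y) \<in> {0..<1} \<times> cantor \<alpha>) \<and>
            summable (\<lambda>i. \<beta> ^ i * g ((bak_inv \<alpha> ^^ Suc i) (x, y)))"
  proof (intro ballI)
    fix v assume v: "v \<in> bigA \<alpha> \<beta>"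
    obtain x y z w where vv: "v = (x, y, z, w)" by (cases v)
    have p: "(x, y) \<in> {0..<1} \<times> cantor \<alpha>" using v vv by (auto simp: bigA_def)
    have "\<forall>i. (bak_inv \<alpha> ^^ i) (x, y) \<in> {0..<1} \<times> cantor \<alpha>"
      using bak_inv_iter_in[OF assms(1,2) p] by blast
    moreover have "summable (\<lambda>i. \<beta> ^ i * g ((bak_inv \<alpha> ^^ Suc i) (x, y)))"
      by (rule phi_summable[OF assms(3) b1' assms(5)]) (use p in auto)
    ultimately show "case v of (x, y, z, w) \<Rightarrow> (\<forall>i. (bak_inv \<alpha> ^^ i) (x, y) \<in> {0..<1} \<times> cantor \<alpha>) \<and>
            summable (\<lambda>i. \<beta> ^ i * g ((bak_inv \<alpha> ^^ Suc i) (x, y)))" by (simp add: vv)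
  qed
  have c2: "inj_on (hg \<alpha> \<beta> g) (bigA \<alpha> \<beta>)"
    by (rule inj_on_inverseI[where g="hg_inv \<alpha> \<beta> g"]) (rule hg_inv_hg)
  have c3: "hg \<alpha> \<beta> g ` bigA \<alpha> \<beta> = Ag \<alpha> \<beta> g \<delta>" by (rule hg_image[OF A])
  have c5: "\<forall>v\<in>Ag \<alpha> \<beta> g \<delta>. hg_inv \<alpha> \<beta> g v \<in> bigA \<alpha> \<beta> \<and> hg \<alpha> \<beta> g (hg_inv \<alpha> \<beta> g v) = v"
    using Ag_sub[OF A] hg_hg_inv by blast
  have c6: "\<forall>v\<in>bigA \<alpha> \<beta>. Bg \<alpha> \<beta> (\<lambda>_. 0) v = hg_inv \<alpha> \<beta> g (Bg \<alpha> \<beta> g (hg \<alpha> \<beta> g v))"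
    using conj_A[OF assms(1-5)] by blast
  have c7: "\<beta> < \<alpha> \<longrightarrow> bilipschitz_on (bigA \<alpha> \<beta>) (hg \<alpha> \<beta> g)"
    using hg_bilip[OF A] by blast
  have c8: "\<alpha> = \<beta> \<longrightarrow> (\<forall>\<rho>. 0 < \<rho> \<and> \<rho> < 1 \<longrightarrow>
              holder_on (bigA \<alpha> \<beta>) (hg \<alpha> \<beta> g) \<rho> \<and>
              holder_on (Ag \<alpha> \<beta> g \<delta>) (hg_inv \<alpha> \<beta> g) \<rho>)"
  proof (intro impI allI)
    fix \<rho> :: real assume ab: "\<alpha> = \<beta>" and r: "0 < \<rho> \<and> \<rho> < 1"
    have "\<alpha> powr 1 < \<alpha> powr \<rho>" using powr_less_mono'[of \<alpha> \<rho> 1] assms(1,2) r by simp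
    then have lt: "\<beta> < \<alpha> powr \<rho>" using ab assms(1) by simp
    define K where "K = 1 / (\<alpha> powr \<rho> - \<beta>)"
    have K0: "0 \<le> K" using lt by (simp add: K_def)
    have F: "Fs \<alpha> \<beta> t \<le> K * t powr \<rho>" if "0 \<le> t" "t \<le> 1" for t
      using Fs_bound1[OF assms(1,3) b1' _ _ lt that(1)] r by (simp add: K_def)
    show "holder_on (bigA \<alpha> \<beta>) (hg \<alpha> \<beta> g) \<rho> \<and> holder_on (Ag \<alpha> \<beta> g \<delta>) (hg_inv \<alpha> \<beta> g) \<rho>"
      using hg_holder_gen[OF A _ _ K0 F] hg_inv_holder_gen[OF A _ _ K0 F] r by simp
  qed
  have c9: "\<alpha> < \<beta> \<longrightarrow> holder_on (bigA \<alpha> \<beta>) (hg \<alpha> \<beta> g) (ln \<beta> / ln \<alpha>)"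
  proof
    assume ab: "\<alpha> < \<beta>"
    have lna: "ln \<alpha> < ln \<beta>" using ab assms(1) by simp
    have lnb: "ln \<beta> < 0" using b1' assms(3) by simp
    have r0: "0 < ln \<beta> / ln \<alpha>" using lna lnb by (simp add: divide_neg_neg)
    have r1: "ln \<beta> / ln \<alpha> \<le> 1" using lna lnb by (simp add: divide_le_eq)
    define K where "K = (1 / (\<beta> - \<alpha>) + 1 / (1 - \<beta>)) / \<beta>"
    have K0: "0 \<le> K" using ab b1' assms(3) by (simp add: K_def)
    have F: "Fs \<alpha> \<beta> t \<le> K * t powr (ln \<beta> / ln \<alpha>)" if "0 \<le> t" "t \<le> 1" for t
      unfolding K_def by (rule Fs_bound3[OF assms(1) ab b1' that])
    show "holder_on (bigA \<alpha> \<beta>) (hg \<alpha> \<beta> g) (ln \<beta> / ln \<alpha>)"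
      by (rule hg_holder_gen[OF A r0 r1 K0 F])
  qed
  show ?thesis using c1 c2 c3 hg_inv_hg c5 c6 c7 c8 c9 by blast
qed

end
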